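(* Let $a,b\in(0,\infty)^d$, let $\varphi\in\mathcal{O}_a^b(\mathbb{C}^d)$, and let $$c = \left(2b_1,\dots,2b_d,\frac{2\pi^2}{a_1},\dots,\frac{2\pi^2}{a_d}\right)\in(0,\infty)^{2d}.$$ Then for every $f\in L^2(\mathbb{R}^d)$, the function $(x,\omega)\mapsto|V_\varphi f(x,\omega)|^2$ on $\mathbb{R}^{2d}$ extends to an entire function on $\mathbb{C}^{2d}$ belonging to $\mathcal{O}^c(\mathbb{C}^{2d})$.
   Context: For $a,b\in(0,\infty)^d$, $\mathcal{O}_a^b(\mathbb{C}^d)$ is the set of entire functions $F$ on $\mathbb{C}^d$ for which there is $C>0$ with $|F(x+iy)| \le C\prod_{j=1}^d e^{-a_j x_j^2}e^{b_j y_j^2}$ for all $x,y\in\mathbb{R}^d$; $\varphi$ is regarded as a window on $\mathbb{R}^d$ via restriction. For $c\in(0,\infty)^{n}$, $\mathcal{O}^c(\mathbb{C}^{n})$ is the set of entire functions $F$ on $\mathbb{C}^n$ with $|F(z)|\le C\prod_{j=1}^{n} e^{c_j|z_j|^2}$ for some $C>0$ and all $z\in\mathbb{C}^n$. The short-time Fourier transform is $V_g f(x,\omega) = \int_{\mathbb{R}^d} f(t)\overline{g(t-x)} e^{-2\pi i \omega\cdot t}\,dt$. *)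

theory Defs
  imports "HOL-Analysis.Analysis"
begin

text \<open>Entire (holomorphic) functions on C^n, with C^n rendered as complex^'n:
  complex (Frechet) differentiable everywhere with a complex-linear derivative.\<close>
definition entire_vec :: "(complex ^ 'n \<Rightarrow> complex) \<Rightarrow> bool" where
  "entire_vec F \<longleftrightarrow>
     (\<forall>z. \<exists>L. (F has_derivative L) (at z) \<and>
              (\<forall>c v. L (\<chi> k. c * v $ k) = c * L v))"

definition cplx_pt :: "real ^ 'd \<Rightarrow> real ^ 'd \<Rightarrow> complex ^ 'd" where
  "cplx_pt x y = (\<chi> j. Complex (x $ j) (y $ j))"

definition O_ab :: "real ^ 'd \<Rightarrow> real ^ 'd \<Rightarrow> (complex ^ 'd \<Rightarrow> complex) set" where
  "O_ab a b = {F. entire_vec F \<and>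
     (\<exists>C>0. \<forall>x y. norm (F (cplx_pt x y))
        \<le> C * (\<Prod>j\<in>UNIV. exp (- a $ j * (x $ j)\<^sup>2) * exp (b $ j * (y $ j)\<^sup>2)))}"

definition O_c :: "real ^ 'n \<Rightarrow> (complex ^ 'n \<Rightarrow> complex) set" where
  "O_c c = {F. entire_vec F \<and>
     (\<exists>C>0. \<forall>z. norm (F z) \<le> C * (\<Prod>j\<in>UNIV. exp (c $ j * (norm (z $ j))\<^sup>2)))}"

definition restr_R :: "(complex ^ 'd \<Rightarrow> complex) \<Rightarrow> real ^ 'd \<Rightarrow> complex" where
  "restr_R F t = F (\<chi> j. complex_of_real (t $ j))"

definition L2 :: "(real ^ 'd \<Rightarrow> complex) set" where
  "L2 = {f. f \<in> borel_measurable lebesgue \<and> integrable lebesgue (\<lambda>t. (norm (f t))\<^sup>2)}"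

definition stft :: "(real ^ 'd \<Rightarrow> complex) \<Rightarrow> (real ^ 'd \<Rightarrow> complex) \<Rightarrow> real ^ 'd \<Rightarrow> real ^ 'd \<Rightarrow> complex" where
  "stft g f x \<omega> = integral\<^sup>L lebesgue
     (\<lambda>t. f t * cnj (g (t - x)) * cis (- 2 * pi * (\<omega> \<bullet> t)))"

text \<open>Point of C^{2d} = C^('d + 'd) with real coordinates (x, omega).\<close>
definition pair_pt :: "real ^ 'd \<Rightarrow> real ^ 'd \<Rightarrow> complex ^ ('d + 'd)" where
  "pair_pt x \<omega> = (\<chi> k. case k of Inl j \<Rightarrow> complex_of_real (x $ j)
                                | Inr j \<Rightarrow> complex_of_real (\<omega> $ j))"

end

theory Submission
  imports Defs "HOL-Complex_Analysis.Cauchy_Integral_Formula" "HOL-Probability.Distributions"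
begin

lemma entire_vecI:
  assumes "\<And>z. (F has_derivative L z) (at z)"
    and "\<And>z c v. L z (\<chi> k. c * v $ k) = c * L z v"
  shows "entire_vec F"
  unfolding entire_vec_def using assms by blast

lemma entire_vecE:
  assumes "entire_vec F"
  obtains L where "\<And>z. (F has_derivative L z) (at z)"
    and "\<And>z c v. L z (\<chi> k. c * v $ k) = c * L z v"
proof -
  from assms have "\<forall>z. \<exists>L. (F has_derivative L) (at z) \<and> (\<forall>c v. L (\<chi> k. c * v $ k) = c * L v)"
    unfolding entire_vec_def by blast
  then obtain L where "\<forall>z. (F has_derivative L z) (at z) \<and> (\<forall>c v. L z (\<chi> k. c * v $ k) = c * L z v)"
    by metis
  then show ?thesis using that by blast
qed

lemma entire_vec_choose:
  assumes "entire_vec F"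
  shows "\<exists>L. (\<forall>z. (F has_derivative L z) (at z)) \<and> (\<forall>z c v. L z (\<chi> k. c * v $ k) = c * L z v)"
proof -
  from assms have "\<forall>z. \<exists>L. (F has_derivative L) (at z) \<and> (\<forall>c v. L (\<chi> k. c * v $ k) = c * L v)"
    unfolding entire_vec_def by blast
  then show ?thesis by metis
qed

lemma entire_vec_const: "entire_vec (\<lambda>z. c)"
  by (rule entire_vecI[where L="\<lambda>z v. 0"]) auto

lemma entire_vec_mult:
  assumes "entire_vec F" "entire_vec G"
  shows "entire_vec (\<lambda>z. F z * G z)"
proof -
  obtain LF where LF: "\<And>z. (F has_derivative LF z) (at z)" "\<And>z c v. LF z (\<chi> k. c * v $ k) = c * LF z v"
    using entire_vec_choose[OF assms(1)] by blast
  obtain LG where LG: "\<And>z. (G has_derivative LG z) (at z)" "\<And>z c v. LG z (\<chi> k. c * v $ k) = c * LG z v"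
    using entire_vec_choose[OF assms(2)] by blast
  show ?thesis
  proof (rule entire_vecI[where L="\<lambda>z h. F z * LG z h + LF z h * G z"])
    fix z show "((\<lambda>z. F z * G z) has_derivative (\<lambda>h. F z * LG z h + LF z h * G z)) (at z)"
      by (rule has_derivative_mult[OF LF(1) LG(1)])
  qed (simp add: LF(2) LG(2) algebra_simps)
qed

lemma entire_vec_holo_comp:
  assumes h: "\<And>w. (h has_field_derivative h' w) (at w)" and "entire_vec F"
  shows "entire_vec (\<lambda>z. h (F z))"
proof -
  obtain LF where LF: "\<And>z. (F has_derivative LF z) (at z)" "\<And>z c v. LF z (\<chi> k. c * v $ k) = c * LF z v"
    using entire_vec_choose[OF assms(2)] by blast
  show ?thesis
  proof (rule entire_vecI[where L="\<lambda>z v. h' (F z) * LF z v"])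
    fix z
    show "((\<lambda>z. h (F z)) has_derivative (\<lambda>v. h' (F z) * LF z v)) (at z)"
      using has_derivative_compose[OF LF(1) h[unfolded has_field_derivative_def]] .
  qed (simp add: LF(2))
qed

lemma entire_vec_linear:
  assumes "bounded_linear T" "\<And>c v. T (\<chi> k. c * v $ k) = c * T v"
  shows "entire_vec T"
  by (rule entire_vecI[where L="\<lambda>z. T"]) (auto intro: bounded_linear_imp_has_derivative assms)

lemma entire_vec_compose:
  assumes "entire_vec \<Phi>" and T: "\<And>z. (T has_derivative T' z) (at z)"
    and T': "\<And>z c v. T' z (\<chi> k. c * v $ k) = (\<chi> k. c * (T' z v) $ k)"
  shows "entire_vec (\<lambda>z. \<Phi> (T z))"
proof -
  obtain L where L: "\<And>z. (\<Phi> has_derivative L z) (at z)" "\<And>z c v. L z (\<chi> k. c * v $ k) = c * L z v"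
    using entire_vec_choose[OF assms(1)] by blast
  show ?thesis
  proof (rule entire_vecI[where L="\<lambda>z v. L (T z) (T' z v)"])
    fix z
    show "((\<lambda>z. \<Phi> (T z)) has_derivative (\<lambda>v. L (T z) (T' z v))) (at z)"
      using has_derivative_compose[OF T L(1)] .
  qed (simp add: L(2) T')
qed

lemma entire_vec_continuous:
  assumes "entire_vec F" shows "continuous_on S F"
proof -
  obtain L where L: "\<And>z. (F has_derivative L z) (at z)"
    using entire_vec_choose[OF assms] by blast
  show ?thesis
    by (intro continuous_at_imp_continuous_on ballI has_derivative_continuous[OF L])
qed

lemma norm_cscale: "norm (\<chi> k. c * (v::complex^'n) $ k) = norm c * norm v"
  unfolding norm_vec_def
  by (simp add: L2_set_right_distrib norm_mult)

lemma linear_cscale_left: "bounded_linear (\<lambda>s::complex. (\<chi> k. s * (h::complex^'n) $ k))"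
proof -
  have "linear (\<lambda>s::complex. (\<chi> k. s * h $ k))"
    by (rule linearI) (auto simp: vec_eq_iff algebra_simps)
  then show ?thesis by (simp add: linear_conv_bounded_linear)
qed

lemma holo_taylor2:
  fixes g :: "complex \<Rightarrow> complex"
  assumes hol: "g holomorphic_on UNIV" and bd: "\<And>w. norm w \<le> 2 \<Longrightarrow> norm (g w) \<le> M"
    and s: "norm s \<le> 1"
  shows "norm (g s - g 0 - deriv g 0 * s) \<le> 2 * M * (norm s)^2"
proof -
  let ?f = "\<lambda>i. (deriv ^^ i) g"
  have hd: "(?f i has_field_derivative ?f (Suc i) x) (at x within cball 0 1)" for i x
  proof -
    have "((deriv ^^ i) g has_field_derivative deriv ((deriv ^^ i) g) x) (at x within cball 0 1)"
      by (rule holomorphic_derivI[OF holomorphic_higher_deriv[OF hol open_UNIV] open_UNIV UNIV_I])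
    then show ?thesis by simp
  qed
  have B: "norm (?f (Suc 1) x) \<le> 2 * M" if "x \<in> cball 0 1" for x
  proof -
    have "norm ((deriv ^^ (Suc 1)) g x) \<le> fact (Suc 1) * M / 1 ^ (Suc 1)"
    proof (rule Cauchy_inequality)
      show "g holomorphic_on ball x 1" using hol by (rule holomorphic_on_subset) auto
      show "continuous_on (cball x 1) g"
        using holomorphic_on_imp_continuous_on[OF hol] by (rule continuous_on_subset) auto
      show "(0::real) < 1" by simp
      fix w assume w: "norm (x - w) = 1"
      have nx: "norm x \<le> 1" using that by auto
      have "norm w \<le> norm x + norm (x - w)" using norm_triangle_ineq4[of x "x - w"] by simp
      then have "norm w \<le> 2" using w nx by linarith
      then show "norm (g w) \<le> M" by (rule bd)
    qed
    moreover have "fact (Suc 1) * M / 1 ^ (Suc 1) = 2 * M" by simp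
    ultimately show ?thesis by simp
  qed
  have T: "cmod (?f 0 s - (\<Sum>i\<le>1. ?f i 0 * (s - 0) ^ i / fact i)) \<le> 2 * M * cmod (s - 0) ^ Suc 1 / fact 1"
  proof (rule complex_Taylor[of "cball 0 1" 1 ?f])
    show "convex (cball (0::complex) 1)" by (rule convex_cball)
    show "\<And>i x. x \<in> cball 0 1 \<Longrightarrow> i \<le> 1 \<Longrightarrow> (?f i has_field_derivative ?f (Suc i) x) (at x within cball 0 1)"
      by (rule hd)
    show "\<And>x. x \<in> cball 0 1 \<Longrightarrow> cmod (?f (Suc 1) x) \<le> 2 * M" by (rule B)
    show "0 \<in> cball (0::complex) 1" by simp
    show "s \<in> cball 0 1" using s by simp
  qed
  have S: "(\<Sum>i\<le>1. ?f i 0 * (s - 0) ^ i / fact i) = g 0 + deriv g 0 * s"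
    by (simp add: atMost_Suc)
  have R: "2 * M * cmod (s - 0) ^ Suc 1 / fact 1 = 2 * M * (norm s)^2"
    by (simp add: power2_eq_square)
  from T show ?thesis unfolding S R by (simp add: algebra_simps)
qed

lemma entire_vec_remainder:
  fixes \<psi> :: "complex^'n \<Rightarrow> complex"
  assumes ent: "entire_vec \<psi>" and LZ: "(\<psi> has_derivative L) (at Z)"
    and lin: "\<And>c v. L (\<chi> k. c * v $ k) = c * L v"
    and bd: "\<And>W. norm (W - Z) \<le> 2 \<Longrightarrow> norm (\<psi> W) \<le> M" and H: "norm H \<le> 1"
  shows "norm (\<psi> (Z + H) - \<psi> Z - L H) \<le> 2 * M * (norm H)^2"
proof (cases "H = 0")
  case True
  have "bounded_linear L" using LZ by (rule has_derivative_bounded_linear)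
  then have "L 0 = 0" by (rule linear_0[OF bounded_linear.linear])
  moreover have "norm (\<psi> Z) \<le> M" using bd[of Z] by simp
  ultimately show ?thesis using True by simp
next
  case False
  obtain L' where L': "\<And>z. (\<psi> has_derivative L' z) (at z)" "\<And>z c v. L' z (\<chi> k. c * v $ k) = c * L' z v"
    using entire_vec_choose[OF ent] by blast
  define h where "h = (\<chi> k. inverse (complex_of_real (norm H)) * H $ k)"
  have nh: "norm h = 1" using False by (simp add: h_def norm_cscale norm_inverse)
  define m where "m = (\<lambda>s::complex. Z + (\<chi> k. s * h $ k))"
  define g where "g = (\<lambda>s. \<psi> (m s))"
  have mder: "(m has_derivative (\<lambda>ds. (\<chi> k. ds * h $ k))) (at s)" for s
    unfolding m_def
    using has_derivative_add[OF has_derivative_const[of Z] bounded_linear_imp_has_derivative[OF linear_cscale_left[of h]]]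
    by simp
  have gder: "(g has_field_derivative L' (m s) h) (at s)" for s
  proof -
    have "(g has_derivative (\<lambda>ds. L' (m s) (\<chi> k. ds * h $ k))) (at s)"
      unfolding g_def by (rule has_derivative_compose[OF mder L'(1)])
    moreover have "(\<lambda>ds. L' (m s) (\<chi> k. ds * h $ k)) = (*) (L' (m s) h)"
      by (auto simp: L'(2) fun_eq_iff mult.commute)
    ultimately show ?thesis by (simp add: has_field_derivative_def)
  qed
  have m0: "m 0 = Z" by (simp add: m_def vec_eq_iff)
  have g0: "(g has_field_derivative L h) (at 0)"
  proof -
    have "(g has_derivative (\<lambda>ds. L (\<chi> k. ds * h $ k))) (at 0)"
      unfolding g_def using has_derivative_compose[OF mder LZ[folded m0]] .
    moreover have "(\<lambda>ds. L (\<chi> k. ds * h $ k)) = (*) (L h)"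
      by (auto simp: lin fun_eq_iff mult.commute)
    ultimately show ?thesis by (simp add: has_field_derivative_def)
  qed
  have hol: "g holomorphic_on UNIV"
    unfolding holomorphic_on_def using gder field_differentiable_def
    by (metis field_differentiable_at_within)
  have gbd: "norm (g w) \<le> M" if "norm w \<le> 2" for w
    unfolding g_def m_def using that by (intro bd) (simp add: norm_cscale nh)
  define s where "s = complex_of_real (norm H)"
  have ns: "norm s \<le> 1" using H by (simp add: s_def)
  have ms: "m s = Z + H"
    using False by (simp add: m_def s_def h_def vec_eq_iff)
  have Ls: "deriv g 0 * s = L H"
  proof -
    have "deriv g 0 = L h" using g0 by (rule DERIV_imp_deriv)
    moreover have "L H = s * L h"
    proof -
      have "H = (\<chi> k. s * h $ k)"
        using False by (simp add: s_def h_def vec_eq_iff)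
      then show ?thesis by (simp add: lin)
    qed
    ultimately show ?thesis by (simp add: mult.commute)
  qed
  have "norm (g s - g 0 - deriv g 0 * s) \<le> 2 * M * (norm s)^2"
    by (rule holo_taylor2[OF hol gbd ns])
  moreover have "g s = \<psi> (Z + H)" by (simp add: g_def ms)
  moreover have "g 0 = \<psi> Z" by (simp add: g_def m0)
  ultimately have "norm (\<psi> (Z + H) - \<psi> Z - L H) \<le> 2 * M * (norm s)^2"
    by (simp only: Ls)
  then show ?thesis by (simp add: s_def)
qed

lemma aux_div: "0 < (r::real) \<Longrightarrow> r * (c * (h / r)\<^sup>2) = c * h\<^sup>2 / r"
  by (simp add: power2_eq_square field_simps)

lemma entire_param_integral:
  fixes \<psi> :: "'t \<Rightarrow> complex^'n \<Rightarrow> complex"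
  assumes ent: "\<And>t. entire_vec (\<psi> t)"
    and meas: "\<And>Z. (\<lambda>t. \<psi> t Z) \<in> borel_measurable M"
    and dom: "\<And>Z. \<exists>G. integrable M G \<and> (\<forall>t\<in>space M. \<forall>W. norm (W - Z) \<le> 2 \<longrightarrow> norm (\<psi> t W) \<le> G t)"
  shows "entire_vec (\<lambda>Z. \<integral>t. \<psi> t Z \<partial>M)"
proof -
  have "\<exists>D. ((\<lambda>Z. \<integral>t. \<psi> t Z \<partial>M) has_derivative D) (at Z) \<and> (\<forall>c v. D (\<chi> k. c * v $ k) = c * D v)" for Z
  proof -
    obtain G where G: "integrable M G" "\<And>t W. t \<in> space M \<Longrightarrow> norm (W - Z) \<le> 2 \<Longrightarrow> norm (\<psi> t W) \<le> G t"
      using dom[of Z] by blast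
    have G0: "0 \<le> G t" if "t \<in> space M" for t
    proof -
      have "norm (\<psi> t Z) \<le> G t" using G(2)[OF that, of Z] by simp
      then show ?thesis by (rule order_trans[OF norm_ge_zero])
    qed
    have "\<forall>t. \<exists>L. (\<psi> t has_derivative L) (at Z) \<and> (\<forall>c v. L (\<chi> k. c * v $ k) = c * L v)"
      using ent unfolding entire_vec_def by blast
    from choice[OF this] obtain L where L0: "\<forall>t. (\<psi> t has_derivative L t) (at Z) \<and> (\<forall>c v. L t (\<chi> k. c * v $ k) = c * L t v)"
      by blast
    have L: "\<And>t. (\<psi> t has_derivative L t) (at Z)" "\<And>t c v. L t (\<chi> k. c * v $ k) = c * L t v"
      using L0 by blast+
    have bl: "bounded_linear (L t)" for t using L(1) by (rule has_derivative_bounded_linear)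
    have lin: "linear (L t)" for t using bl[of t] by (rule bounded_linear.linear)
    have rem: "norm (\<psi> t (Z + H) - \<psi> t Z - L t H) \<le> 2 * G t * (norm H)^2"
      if t: "t \<in> space M" and H: "norm H \<le> 1" for t H
      by (rule entire_vec_remainder[OF ent L(1) L(2) G(2)[OF t] H])
    have Lbd: "norm (L t H) \<le> 4 * G t * norm H" if t: "t \<in> space M" for t H
    proof (cases "H = 0")
      case True then show ?thesis using linear_0[OF lin] by simp
    next
      case False
      define h where "h = H /\<^sub>R norm H"
      have nh: "norm h = 1" using False by (simp add: h_def)
      have a: "norm (\<psi> t (Z + h) - \<psi> t Z - L t h) \<le> 2 * G t" using rem[OF t, of h] nh by simp
      have b: "norm (\<psi> t (Z + h)) \<le> G t" using G(2)[OF t, of "Z+h"] nh by simp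
      have c: "norm (\<psi> t Z) \<le> G t" using G(2)[OF t, of Z] by simp
      have "norm (L t h) \<le> 4 * G t"
        using norm_triangle_ineq4[of "\<psi> t (Z+h) - \<psi> t Z" "\<psi> t (Z + h) - \<psi> t Z - L t h"]
          norm_triangle_ineq4[of "\<psi> t (Z+h)" "\<psi> t Z"] a b c by simp
      moreover have "L t H = norm H *\<^sub>R L t h"
      proof -
        have "H = norm H *\<^sub>R h" using False by (simp add: h_def)
        then have "L t H = L t (norm H *\<^sub>R h)" by simp
        also have "\<dots> = norm H *\<^sub>R L t h" by (rule linear_scale[OF lin])
        finally show ?thesis .
      qed
      ultimately show ?thesis
        by (simp add: mult.commute mult_left_mono)
    qed
    have Lmeas: "(\<lambda>t. L t H) \<in> borel_measurable M" for H
    proof (rule borel_measurable_LIMSEQ_metric[where f="\<lambda>n t. of_real (real (Suc n)) * (\<psi> t (Z + (1 / real (Suc n)) *\<^sub>R H) - \<psi> t Z)"])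
      show "(\<lambda>t. of_real (real (Suc n)) * (\<psi> t (Z + (1 / real (Suc n)) *\<^sub>R H) - \<psi> t Z)) \<in> borel_measurable M" for n
        by (intro borel_measurable_times borel_measurable_diff borel_measurable_const meas)
      fix t assume t: "t \<in> space M"
      show "(\<lambda>n. of_real (real (Suc n)) * (\<psi> t (Z + (1 / real (Suc n)) *\<^sub>R H) - \<psi> t Z)) \<longlonglongrightarrow> L t H"
      proof (rule LIM_zero_cancel, rule Lim_null_comparison)
        have lim: "(\<lambda>n. 2 * G t * (norm H)^2 / real (Suc n)) \<longlonglongrightarrow> 0"
          using LIMSEQ_Suc[OF lim_const_over_n[of "2 * G t * (norm H)^2"]] by simp
        then show "(\<lambda>n. 2 * G t * (norm H)^2 / real (Suc n)) \<longlonglongrightarrow> 0" .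
        obtain N :: nat where N: "norm H \<le> real N" using real_arch_simple by blast
        show "\<forall>\<^sub>F n in sequentially. norm (of_real (real (Suc n)) * (\<psi> t (Z + (1 / real (Suc n)) *\<^sub>R H) - \<psi> t Z) - L t H)
              \<le> 2 * G t * (norm H)^2 / real (Suc n)"
        proof (rule eventually_sequentiallyI[of N])
          fix n assume n: "N \<le> n"
          define Hn where "Hn = (1 / real (Suc n)) *\<^sub>R H"
          have nHn: "norm Hn = norm H / real (Suc n)" by (simp add: Hn_def)
          have "norm H \<le> real (Suc n)" using N n by simp
          then have Hn1: "norm Hn \<le> 1" by (simp add: nHn)
          have LH: "L t H = real (Suc n) *\<^sub>R L t Hn"
            by (simp add: Hn_def linear_scale[OF lin])
          have "of_real (real (Suc n)) * (\<psi> t (Z + Hn) - \<psi> t Z) - L t H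
                = of_real (real (Suc n)) * (\<psi> t (Z + Hn) - \<psi> t Z - L t Hn)"
            by (simp add: LH scaleR_conv_of_real algebra_simps)
          note eqn = this
          then have "norm (of_real (real (Suc n)) * (\<psi> t (Z + Hn) - \<psi> t Z) - L t H)
                = real (Suc n) * norm (\<psi> t (Z + Hn) - \<psi> t Z - L t Hn)"
          proof -
            have nS: "norm (complex_of_real (real (Suc n))) = real (Suc n)" by (simp only: norm_of_real abs_of_nat)
            show ?thesis unfolding eqn by (simp only: norm_mult nS)
          qed
          also have "\<dots> \<le> real (Suc n) * (2 * G t * (norm Hn)^2)"
            using rem[OF t Hn1] by (intro mult_left_mono) auto
          also have "\<dots> = 2 * G t * (norm H)^2 / real (Suc n)"
            unfolding nHn by (rule aux_div) simp
          finally show "norm (of_real (real (Suc n)) * (\<psi> t (Z + (1 / real (Suc n)) *\<^sub>R H) - \<psi> t Z) - L t H)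
              \<le> 2 * G t * (norm H)^2 / real (Suc n)" by (simp add: Hn_def)
        qed
      qed
    qed
    have Lint: "integrable M (\<lambda>t. L t H)" for H
    proof (rule Bochner_Integration.integrable_bound[where f="\<lambda>t. 4 * G t * norm H"])
      show "integrable M (\<lambda>t. 4 * G t * norm H)" using G(1) by simp
      show "(\<lambda>t. L t H) \<in> borel_measurable M" by (rule Lmeas)
      show "AE t in M. norm (L t H) \<le> norm (4 * G t * norm H)"
        using Lbd G0 by (intro AE_I2) (simp add: abs_mult)
    qed
    have intpsi: "integrable M (\<lambda>t. \<psi> t W)" if "norm (W - Z) \<le> 2" for W
    proof (rule Bochner_Integration.integrable_bound[OF G(1) meas])
      show "AE t in M. norm (\<psi> t W) \<le> norm (G t)"
        using G(2) G0 that by (intro AE_I2) force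
    qed
    define D where "D H = (\<integral>t. L t H \<partial>M)" for H
    define I where "I = (\<integral>t. G t \<partial>M)"
    have I0: "0 \<le> I" unfolding I_def using G0 by (rule Bochner_Integration.integral_nonneg)
    have Dlin: "bounded_linear D"
    proof (rule bounded_linear_intro[where K="4 * I"])
      fix x y show "D (x + y) = D x + D y"
        by (simp add: D_def linear_add[OF lin] Lint)
      fix r x show "D (r *\<^sub>R x) = r *\<^sub>R D x"
        by (simp add: D_def linear_scale[OF lin])
      fix x
      have "norm (D x) \<le> (\<integral>t. norm (L t x) \<partial>M)"
        unfolding D_def by (rule Bochner_Integration.integral_norm_bound)
      also have "\<dots> \<le> (\<integral>t. 4 * G t * norm x \<partial>M)"
        using Lint G(1) Lbd by (intro Bochner_Integration.integral_mono) auto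
      also have "\<dots> = norm x * (4 * I)"
        by (simp add: I_def)
      finally show "norm (D x) \<le> norm x * (4 * I)" .
    qed
    have Dc: "D (\<chi> k. c * v $ k) = c * D v" for c v
      by (simp add: D_def L(2))
    have "((\<lambda>Z. \<integral>t. \<psi> t Z \<partial>M) has_derivative D) (at Z)"
      unfolding has_derivative_at_alt
    proof (intro conjI allI impI Dlin)
      fix e :: real assume e: "0 < e"
      define d where "d = min 1 (e / (2 * I + 1))"
      show "\<exists>d>0. \<forall>y. norm (y - Z) < d \<longrightarrow>
              norm ((\<integral>t. \<psi> t y \<partial>M) - (\<integral>t. \<psi> t Z \<partial>M) - D (y - Z)) \<le> e * norm (y - Z)"
      proof (intro exI[of _ d] conjI allI impI)
        show "0 < d" using e I0 by (simp add: d_def)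
        fix y assume y: "norm (y - Z) < d"
        define H where "H = y - Z"
        have yH: "y = Z + H" by (simp add: H_def)
        have H1: "norm H \<le> 1" using y by (simp add: d_def H_def)
        have Hd: "norm H \<le> e / (2 * I + 1)" using y by (simp add: d_def H_def)
        have iy: "integrable M (\<lambda>t. \<psi> t y)" using H1 by (intro intpsi) (simp add: H_def)
        have iZ: "integrable M (\<lambda>t. \<psi> t Z)" by (intro intpsi) simp
        have eq: "(\<integral>t. \<psi> t y \<partial>M) - (\<integral>t. \<psi> t Z \<partial>M) - D H = (\<integral>t. (\<psi> t y - \<psi> t Z - L t H) \<partial>M)"
          by (simp add: D_def iy iZ Lint)
        have "norm (\<integral>t. (\<psi> t y - \<psi> t Z - L t H) \<partial>M) \<le> (\<integral>t. norm (\<psi> t y - \<psi> t Z - L t H) \<partial>M)"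
          by (rule Bochner_Integration.integral_norm_bound)
        also have "\<dots> \<le> (\<integral>t. 2 * G t * (norm H)^2 \<partial>M)"
          using rem H1 iy iZ Lint G(1) by (intro Bochner_Integration.integral_mono) (auto simp: yH)
        also have "\<dots> = norm H * (2 * I * norm H)"
          by (simp add: I_def power2_eq_square algebra_simps)
        also have "\<dots> \<le> norm H * e"
        proof (rule mult_left_mono)
          have "2 * I * norm H \<le> 2 * I * (e / (2 * I + 1))"
            using Hd I0 by (intro mult_left_mono) auto
          also have "\<dots> \<le> e" using I0 e by (simp add: field_simps)
          finally show "2 * I * norm H \<le> e" .
        qed simp
        finally show "norm ((\<integral>t. \<psi> t y \<partial>M) - (\<integral>t. \<psi> t Z \<partial>M) - D (y - Z)) \<le> e * norm (y - Z)"
          using eq by (simp add: H_def mult.commute)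
      qed
    qed
    then show ?thesis using Dc by blast
  qed
  then show ?thesis unfolding entire_vec_def by blast
qed

definition gc :: "real \<Rightarrow> real" where
  "gc \<alpha> = (\<integral>s. exp (- \<alpha> * s\<^sup>2) \<partial>lborel)"

lemma integrable_gauss1:
  fixes \<alpha> :: real assumes a: "0 < \<alpha>"
  shows "integrable lborel (\<lambda>s::real. exp (- \<alpha> * s\<^sup>2))"
proof -
  define \<sigma> where "\<sigma> = sqrt (1 / (2 * \<alpha>))"
  have s0: "0 < \<sigma>" using a by (simp add: \<sigma>_def)
  have s2: "\<sigma>\<^sup>2 = 1 / (2 * \<alpha>)" using a by (simp add: \<sigma>_def)
  have "exp (- \<alpha> * s\<^sup>2) = sqrt (2 * pi * \<sigma>\<^sup>2) * normal_density 0 \<sigma> s" for s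
  proof -
    have "sqrt (2 * pi * \<sigma>\<^sup>2) > 0" using s0 by simp
    have p: "sqrt (2 * pi * \<sigma>\<^sup>2) \<noteq> 0" using s0 by simp
    have e: "- (s - 0)\<^sup>2 / (2 * \<sigma>\<^sup>2) = - \<alpha> * s\<^sup>2" using a by (simp add: s2)
    show ?thesis unfolding normal_density_def e using p by simp
  qed
  then have eq: "(\<lambda>s. exp (- \<alpha> * s\<^sup>2)) = (\<lambda>s. sqrt (2 * pi * \<sigma>\<^sup>2) * normal_density 0 \<sigma> s)"
    by (rule ext)
  show ?thesis unfolding eq
    using integrable_normal_density[OF s0, of 0] by (rule integrable_mult_right)
qed

lemma gc_nonneg: "0 \<le> gc \<alpha>"
  unfolding gc_def by (rule Bochner_Integration.integral_nonneg) simp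

lemma nn_integral_gauss1:
  fixes \<alpha> p \<beta> :: real assumes a: "0 < \<alpha>"
  shows "(\<integral>\<^sup>+s. ennreal (exp (- \<alpha> * (s - p)\<^sup>2 + \<beta> * s)) \<partial>lborel)
       = ennreal (exp (\<beta> * p + \<beta>\<^sup>2 / (4 * \<alpha>)) * gc \<alpha>)"
proof -
  define q where "q = p + \<beta> / (2 * \<alpha>)"
  define K where "K = exp (\<beta> * p + \<beta>\<^sup>2 / (4 * \<alpha>))"
  have K0: "0 \<le> K" by (simp add: K_def)
  have pt: "exp (- \<alpha> * (s - p)\<^sup>2 + \<beta> * s) = K * exp (- \<alpha> * (s - q)\<^sup>2)" for s
  proof -
    have eq: "- \<alpha> * (s - p)\<^sup>2 + \<beta> * s = (\<beta> * p + \<beta>\<^sup>2 / (4 * \<alpha>)) + (- \<alpha> * (s - q)\<^sup>2)"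
      using a by (simp add: q_def power2_eq_square field_simps)
    show ?thesis unfolding K_def by (simp only: eq exp_add)
  qed
  have "(\<integral>\<^sup>+s. ennreal (exp (- \<alpha> * (s - p)\<^sup>2 + \<beta> * s)) \<partial>lborel)
      = (\<integral>\<^sup>+s. ennreal K * ennreal (exp (- \<alpha> * (s - q)\<^sup>2)) \<partial>lborel)"
    by (intro nn_integral_cong) (subst pt, simp add: ennreal_mult K0)
  also have "\<dots> = ennreal K * (\<integral>\<^sup>+s. ennreal (exp (- \<alpha> * (s - q)\<^sup>2)) \<partial>lborel)"
    by (rule nn_integral_cmult) simp
  also have "(\<integral>\<^sup>+s. ennreal (exp (- \<alpha> * (s - q)\<^sup>2)) \<partial>lborel) = (\<integral>\<^sup>+s. ennreal (exp (- \<alpha> * s\<^sup>2)) \<partial>lborel)"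
  proof -
    have m: "(\<lambda>s. ennreal (exp (- \<alpha> * (s - q)\<^sup>2))) \<in> borel_measurable borel" by measurable
    show ?thesis using nn_integral_real_affine[OF m, of 1 q] by simp
  qed
  also have "\<dots> = ennreal (gc \<alpha>)"
    unfolding gc_def by (rule nn_integral_eq_integral[OF integrable_gauss1[OF a]]) simp
  finally show ?thesis
    by (simp add: K_def ennreal_mult gc_nonneg)
qed

lemma Basis_real_vec: "(Basis :: (real^'d) set) = range (\<lambda>i. axis i 1)"
  by (auto simp: Basis_vec_def)

lemma nn_integral_gauss_prod:
  fixes \<alpha> p \<beta> :: "'d::finite \<Rightarrow> real"
  assumes a: "\<And>j. 0 < \<alpha> j"
  shows "(\<integral>\<^sup>+t. ennreal (\<Prod>j\<in>UNIV. exp (- \<alpha> j * (t $ j - p j)\<^sup>2 + \<beta> j * t $ j)) \<partial>(lborel :: (real^'d) measure))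
       = ennreal (\<Prod>j\<in>UNIV. exp (\<beta> j * p j + (\<beta> j)\<^sup>2 / (4 * \<alpha> j)) * gc (\<alpha> j))"
proof -
  define ix where "ix b = (SOME j. b = (axis j 1 :: real^'d))" for b :: "real^'d"
  have ix: "ix (axis j 1) = j" for j
    unfolding ix_def by (rule some_equality) (auto simp: axis_eq_axis)
  define f where "f b s = ennreal (exp (- \<alpha> (ix b) * (s - p (ix b))\<^sup>2 + \<beta> (ix b) * s))" for b s
  have inj: "inj (\<lambda>i. axis i (1::real) :: real^'d)"
    by (auto simp: inj_def axis_eq_axis)
  have "(\<lambda>t::real^'d. ennreal (\<Prod>j\<in>UNIV. exp (- \<alpha> j * (t $ j - p j)\<^sup>2 + \<beta> j * t $ j)))
      = (\<lambda>t. \<Prod>b\<in>Basis. f b (t \<bullet> b))"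
  proof
    fix t :: "real^'d"
    have "(\<Prod>b\<in>Basis. f b (t \<bullet> b)) = (\<Prod>j\<in>UNIV. f (axis j 1) (t \<bullet> axis j 1))"
      unfolding Basis_real_vec by (rule prod.reindex[OF inj, unfolded comp_def])
    also have "\<dots> = (\<Prod>j\<in>UNIV. ennreal (exp (- \<alpha> j * (t $ j - p j)\<^sup>2 + \<beta> j * t $ j)))"
      by (simp add: f_def ix inner_axis)
    also have "\<dots> = ennreal (\<Prod>j\<in>UNIV. exp (- \<alpha> j * (t $ j - p j)\<^sup>2 + \<beta> j * t $ j))"
      by (rule prod_ennreal) simp
    finally show "ennreal (\<Prod>j\<in>UNIV. exp (- \<alpha> j * (t $ j - p j)\<^sup>2 + \<beta> j * t $ j)) = (\<Prod>b\<in>Basis. f b (t \<bullet> b))" ..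
  qed
  then have "(\<integral>\<^sup>+t. ennreal (\<Prod>j\<in>UNIV. exp (- \<alpha> j * (t $ j - p j)\<^sup>2 + \<beta> j * t $ j)) \<partial>(lborel :: (real^'d) measure))
      = (\<integral>\<^sup>+t. (\<Prod>b\<in>Basis. f b (t \<bullet> b)) \<partial>(lborel :: (real^'d) measure))" by simp
  also have "\<dots> = (\<Prod>b\<in>Basis. (\<integral>\<^sup>+s. f b s \<partial>lborel))"
    by (rule nn_integral_lborel_prod) (auto simp: f_def)
  also have "\<dots> = (\<Prod>j\<in>UNIV. (\<integral>\<^sup>+s. f (axis j 1) s \<partial>lborel))"
    unfolding Basis_real_vec by (rule prod.reindex[OF inj, unfolded comp_def])
  also have "\<dots> = (\<Prod>j\<in>UNIV. ennreal (exp (\<beta> j * p j + (\<beta> j)\<^sup>2 / (4 * \<alpha> j)) * gc (\<alpha> j)))"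
    by (intro prod.cong refl) (simp only: f_def ix nn_integral_gauss1[OF a])
  also have "\<dots> = ennreal (\<Prod>j\<in>UNIV. exp (\<beta> j * p j + (\<beta> j)\<^sup>2 / (4 * \<alpha> j)) * gc (\<alpha> j))"
    by (rule prod_ennreal) (simp add: gc_nonneg)
  finally show ?thesis .
qed

definition psi :: "(complex^('d::finite) \<Rightarrow> complex) \<Rightarrow> (real^'d \<Rightarrow> complex) \<Rightarrow> real \<Rightarrow> real^'d \<Rightarrow> complex^('d+'d) \<Rightarrow> complex" where
  "psi \<Phi> g \<sigma> t Z = g t * (\<Phi> (\<chi> j. complex_of_real (t $ j) - Z $ Inl j) *
      exp (\<i> * complex_of_real (2 * pi * \<sigma>) * (\<Sum>j\<in>UNIV. Z $ Inr j * complex_of_real (t $ j))))"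

lemma entire_vec_psi:
  fixes \<Phi> :: "complex^('d::finite) \<Rightarrow> complex"
  assumes ent: "entire_vec \<Phi>"
  shows "entire_vec (psi \<Phi> g \<sigma> t)"
proof -
  have lin1: "bounded_linear (\<lambda>Z::complex^('d+'d). (\<chi> j. Z $ Inl j) :: complex^'d)"
  proof -
    have "linear (\<lambda>Z::complex^('d+'d). (\<chi> j. Z $ Inl j) :: complex^'d)"
      by (rule linearI) (simp_all add: vec_eq_iff)
    then show ?thesis by (simp add: linear_conv_bounded_linear)
  qed
  have T: "((\<lambda>Z. (\<chi> j. complex_of_real (t $ j)) - (\<chi> j. Z $ Inl j)) has_derivative (\<lambda>v. 0 - (\<chi> j. v $ Inl j))) (at Z)"
    for Z :: "complex^('d+'d)"
    by (rule has_derivative_diff[OF has_derivative_const bounded_linear_imp_has_derivative[OF lin1]])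
  have T': "0 - (\<chi> j. (\<chi> k. c * v $ k) $ Inl j) = (\<chi> k. c * (0 - (\<chi> j. v $ Inl j)) $ k)"
    for c and v :: "complex^('d+'d)"
    by (simp add: vec_eq_iff)
  have E1: "entire_vec (\<lambda>Z::complex^('d+'d). \<Phi> ((\<chi> j. complex_of_real (t $ j)) - (\<chi> j. Z $ Inl j)))"
    apply (rule entire_vec_compose[OF ent])
     apply (rule T)
    apply (simp add: vec_eq_iff)
    done
  define \<kappa> where "\<kappa> = \<i> * complex_of_real (2 * pi * \<sigma>)"
  have lin2: "bounded_linear (\<lambda>Z::complex^('d+'d). \<kappa> * (\<Sum>j\<in>UNIV. Z $ Inr j * complex_of_real (t $ j)))"
  proof -
    have "linear (\<lambda>Z::complex^('d+'d). \<kappa> * (\<Sum>j\<in>UNIV. Z $ Inr j * complex_of_real (t $ j)))"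
    proof (rule linearI)
      fix x y :: "complex^('d+'d)"
      show "\<kappa> * (\<Sum>j\<in>UNIV. (x + y) $ Inr j * complex_of_real (t $ j)) =
        \<kappa> * (\<Sum>j\<in>UNIV. x $ Inr j * complex_of_real (t $ j)) + \<kappa> * (\<Sum>j\<in>UNIV. y $ Inr j * complex_of_real (t $ j))"
        by (simp add: sum.distrib algebra_simps)
    next
      fix r :: real and x :: "complex^('d+'d)"
      have sc: "(r *\<^sub>R x) $ i = complex_of_real r * x $ i" for i
        by (subst vector_scaleR_component) (rule scaleR_conv_of_real)
      show "\<kappa> * (\<Sum>j\<in>UNIV. (r *\<^sub>R x) $ Inr j * complex_of_real (t $ j)) =
        r *\<^sub>R (\<kappa> * (\<Sum>j\<in>UNIV. x $ Inr j * complex_of_real (t $ j)))"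
        unfolding sc by (simp add: sum_distrib_left algebra_simps scaleR_conv_of_real)
    qed
    then show ?thesis by (simp add: linear_conv_bounded_linear)
  qed
  have c2: "\<kappa> * (\<Sum>j\<in>UNIV. (\<chi> k. c * v $ k) $ Inr j * complex_of_real (t $ j))
      = c * (\<kappa> * (\<Sum>j\<in>UNIV. v $ Inr j * complex_of_real (t $ j)))" for c and v :: "complex^('d+'d)"
    by (simp add: sum_distrib_left algebra_simps)
  have E2: "entire_vec (\<lambda>Z::complex^('d+'d). exp (\<kappa> * (\<Sum>j\<in>UNIV. Z $ Inr j * complex_of_real (t $ j))))"
    by (rule entire_vec_holo_comp[OF DERIV_exp entire_vec_linear[OF lin2 c2]])
  have "entire_vec (\<lambda>Z::complex^('d+'d). g t * (\<Phi> ((\<chi> j. complex_of_real (t $ j)) - (\<chi> j. Z $ Inl j)) *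
         exp (\<kappa> * (\<Sum>j\<in>UNIV. Z $ Inr j * complex_of_real (t $ j)))))"
    by (intro entire_vec_mult entire_vec_const E1 E2)
  moreover have "(\<chi> j. complex_of_real (t $ j) - Z $ Inl j) = (\<chi> j. complex_of_real (t $ j)) - (\<chi> j. Z $ Inl j)"
    for Z :: "complex^('d+'d)"
    by (simp add: vec_eq_iff)
  ultimately show ?thesis
    by (simp add: psi_def[abs_def] \<kappa>_def)
qed

lemma psi_meas:
  fixes \<Phi> :: "complex^('d::finite) \<Rightarrow> complex" and Z :: "complex^('d+'d)"
  assumes g: "g \<in> borel_measurable lebesgue" and ent: "entire_vec \<Phi>"
  shows "(\<lambda>t. psi \<Phi> g \<sigma> t Z) \<in> borel_measurable lebesgue"
proof -
  have c: "continuous_on UNIV (\<lambda>t::real^'d. \<Phi> (\<chi> j. complex_of_real (t $ j) - Z $ Inl j) *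
      exp (\<i> * complex_of_real (2 * pi * \<sigma>) * (\<Sum>j\<in>UNIV. Z $ Inr j * complex_of_real (t $ j))))"
    by (intro continuous_intros continuous_on_compose2[OF entire_vec_continuous[OF ent]]
          linear_continuous_on bounded_linear_vec_nth) auto
  have "(\<lambda>t::real^'d. \<Phi> (\<chi> j. complex_of_real (t $ j) - Z $ Inl j) *
      exp (\<i> * complex_of_real (2 * pi * \<sigma>) * (\<Sum>j\<in>UNIV. Z $ Inr j * complex_of_real (t $ j)))) \<in> borel_measurable lebesgue"
    using borel_measurable_continuous_onI[OF c]
    by (intro measurable_completion) simp
  with g show ?thesis
    unfolding psi_def by (rule borel_measurable_times)
qed


lemma sq_sum_le: "((p::real) + q)\<^sup>2 \<le> 2 * p\<^sup>2 + 2 * q\<^sup>2"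
proof -
  have "0 \<le> (p - q)\<^sup>2" by simp
  then show ?thesis by (simp add: power2_eq_square algebra_simps)
qed

lemma amgm_aux:
  assumes a: "0 < (a::real)"
  shows "m * \<bar>u\<bar> \<le> (a / 4) * u\<^sup>2 + m\<^sup>2 / a"
proof -
  have "0 \<le> (a / 4) * (\<bar>u\<bar> - 2 * m / a)\<^sup>2" using a by simp
  also have "(a / 4) * (\<bar>u\<bar> - 2 * m / a)\<^sup>2 = (a / 4) * u\<^sup>2 + m\<^sup>2 / a - m * \<bar>u\<bar>"
    using a by (simp add: power2_eq_square field_simps)
  finally show ?thesis by simp
qed

lemma coord_dom:
  fixes a b \<sigma> x y \<eta> t r y' \<eta>' :: real
  assumes a: "0 < a" and b: "0 \<le> b" and r: "\<bar>r - x\<bar> \<le> 2" and y': "\<bar>y' - y\<bar> \<le> 2" and e': "\<bar>\<eta>' - \<eta>\<bar> \<le> 2"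
  shows "- a * (t - r)\<^sup>2 + b * y'\<^sup>2 - 2 * pi * \<sigma> * \<eta>' * t
     \<le> - (a / 4) * (t - x)\<^sup>2 + (4 * a + b * (\<bar>y\<bar> + 2)\<^sup>2 + 2 * pi * \<bar>\<sigma>\<bar> * (\<bar>\<eta>\<bar> + 2) * \<bar>x\<bar>
         + (2 * pi * \<bar>\<sigma>\<bar> * (\<bar>\<eta>\<bar> + 2))\<^sup>2 / a)"
proof -
  define m where "m = 2 * pi * \<bar>\<sigma>\<bar> * (\<bar>\<eta>\<bar> + 2)"
  have m0: "0 \<le> m" by (simp add: m_def)
  have rx: "(r - x)\<^sup>2 \<le> 4"
  proof -
    have "\<bar>r - x\<bar>\<^sup>2 \<le> 2\<^sup>2" using r by (intro power_mono) auto
    then show ?thesis by simp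
  qed
  have s1: "(t - x)\<^sup>2 \<le> 2 * (t - r)\<^sup>2 + 8"
    using sq_sum_le[of "t - r" "r - x"] rx by simp
  have s1': "- a * (t - r)\<^sup>2 \<le> - (a / 2) * (t - x)\<^sup>2 + 4 * a"
  proof -
    have "a * (t - x)\<^sup>2 \<le> a * (2 * (t - r)\<^sup>2 + 8)" using s1 a by (intro mult_left_mono) auto
    then show ?thesis by (simp add: algebra_simps)
  qed
  have s2: "b * y'\<^sup>2 \<le> b * (\<bar>y\<bar> + 2)\<^sup>2"
  proof -
    have "\<bar>y'\<bar> \<le> \<bar>y\<bar> + 2" using y' by linarith
    then have "\<bar>y'\<bar>\<^sup>2 \<le> (\<bar>y\<bar> + 2)\<^sup>2" by (intro power_mono) auto
    then show ?thesis using b by (intro mult_left_mono) auto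
  qed
  have s3: "- 2 * pi * \<sigma> * \<eta>' * t \<le> m * \<bar>t - x\<bar> + m * \<bar>x\<bar>"
  proof -
    have "- 2 * pi * \<sigma> * \<eta>' * t \<le> \<bar>2 * pi * \<sigma> * \<eta>' * t\<bar>" by simp
    also have "\<dots> = 2 * pi * \<bar>\<sigma>\<bar> * \<bar>\<eta>'\<bar> * \<bar>t\<bar>" by (simp add: abs_mult)
    also have "\<dots> \<le> 2 * pi * \<bar>\<sigma>\<bar> * (\<bar>\<eta>\<bar> + 2) * (\<bar>t - x\<bar> + \<bar>x\<bar>)"
    proof (intro mult_mono mult_left_mono)
      show "\<bar>\<eta>'\<bar> \<le> \<bar>\<eta>\<bar> + 2" using e' by linarith
      show "\<bar>t\<bar> \<le> \<bar>t - x\<bar> + \<bar>x\<bar>" by linarith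
    qed auto
    also have "\<dots> = m * \<bar>t - x\<bar> + m * \<bar>x\<bar>" by (simp add: m_def algebra_simps)
    finally show ?thesis .
  qed
  have s4: "m * \<bar>t - x\<bar> \<le> (a / 4) * (t - x)\<^sup>2 + m\<^sup>2 / a"
    by (rule amgm_aux[OF a])
  have "- a * (t - r)\<^sup>2 + b * y'\<^sup>2 - 2 * pi * \<sigma> * \<eta>' * t
      \<le> - (a / 2) * (t - x)\<^sup>2 + 4 * a + b * (\<bar>y\<bar> + 2)\<^sup>2 + ((a / 4) * (t - x)\<^sup>2 + m\<^sup>2 / a) + m * \<bar>x\<bar>"
    using s1' s2 s3 s4 by linarith
  also have "\<dots> = - (a / 4) * (t - x)\<^sup>2 + (4 * a + b * (\<bar>y\<bar> + 2)\<^sup>2 + m * \<bar>x\<bar> + m\<^sup>2 / a)"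
    by (simp add: algebra_simps)
  finally show ?thesis by (simp add: m_def)
qed

lemma O_ab_bound:
  fixes \<Phi> :: "complex^('d::finite) \<Rightarrow> complex"
  assumes "\<Phi> \<in> O_ab a b"
  obtains C where "C > 0" "\<And>t w. norm (\<Phi> (\<chi> j. complex_of_real (t $ j) - w j))
     \<le> C * (\<Prod>j\<in>UNIV. exp (- a $ j * (t $ j - Re (w j))\<^sup>2) * exp (b $ j * (Im (w j))\<^sup>2))"
proof -
  from assms obtain C where C: "C > 0"
    "\<And>x y. norm (\<Phi> (cplx_pt x y)) \<le> C * (\<Prod>j\<in>UNIV. exp (- a $ j * (x $ j)\<^sup>2) * exp (b $ j * (y $ j)\<^sup>2))"
    unfolding O_ab_def by blast
  have "norm (\<Phi> (\<chi> j. complex_of_real (t $ j) - w j))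
     \<le> C * (\<Prod>j\<in>UNIV. exp (- a $ j * (t $ j - Re (w j))\<^sup>2) * exp (b $ j * (Im (w j))\<^sup>2))" for t w
  proof -
    have eq: "(\<chi> j. complex_of_real (t $ j) - w j) = cplx_pt (\<chi> j. t $ j - Re (w j)) (\<chi> j. - Im (w j))"
      by (simp add: cplx_pt_def vec_eq_iff complex_eq_iff)
    show ?thesis unfolding eq using C(2)[of "\<chi> j. t $ j - Re (w j)" "\<chi> j. - Im (w j)"] by simp
  qed
  with C(1) show ?thesis using that by blast
qed

lemma norm_exp_part:
  fixes W :: "complex^('d::finite + 'd)" and t :: "real^'d"
  shows "norm (exp (\<i> * complex_of_real (2 * pi * \<sigma>) * (\<Sum>j\<in>UNIV. W $ Inr j * complex_of_real (t $ j))))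
    = (\<Prod>j\<in>UNIV. exp (- (2 * pi * \<sigma> * Im (W $ Inr j) * t $ j)))"
proof -
  have "Re (\<i> * complex_of_real (2 * pi * \<sigma>) * (\<Sum>j\<in>UNIV. W $ Inr j * complex_of_real (t $ j)))
      = - (2 * pi * \<sigma>) * Im (\<Sum>j\<in>UNIV. W $ Inr j * complex_of_real (t $ j))"
    by simp
  also have "Im (\<Sum>j\<in>UNIV. W $ Inr j * complex_of_real (t $ j)) = (\<Sum>j\<in>UNIV. Im (W $ Inr j) * t $ j)"
    by (simp add: Im_sum)
  finally have "Re (\<i> * complex_of_real (2 * pi * \<sigma>) * (\<Sum>j\<in>UNIV. W $ Inr j * complex_of_real (t $ j)))
      = (\<Sum>j\<in>UNIV. - (2 * pi * \<sigma> * Im (W $ Inr j) * t $ j))"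
    by (simp add: sum_distrib_left sum_negf algebra_simps)
  then show ?thesis by (simp add: exp_sum)
qed

definition ex :: "real^'d \<Rightarrow> real^'d \<Rightarrow> real \<Rightarrow> real^'d \<Rightarrow> complex^('d + 'd) \<Rightarrow> 'd \<Rightarrow> real" where
  "ex a b \<sigma> t W j = - a $ j * (t $ j - Re (W $ Inl j))\<^sup>2 + b $ j * (Im (W $ Inl j))\<^sup>2
      - 2 * pi * \<sigma> * Im (W $ Inr j) * t $ j"

lemma exp3: "exp ((x::real) + y - z) = exp x * exp y * exp (- z)"
  by (simp add: exp_add[symmetric])

lemma psi_bound:
  fixes \<Phi> :: "complex^('d::finite) \<Rightarrow> complex"
  assumes "\<Phi> \<in> O_ab a b"
  obtains C where "C > 0" "\<And>t W. norm (psi \<Phi> g \<sigma> t W) \<le> norm (g t) * C * (\<Prod>j\<in>UNIV. exp (ex a b \<sigma> t W j))"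
proof -
  obtain C where C: "C > 0" "\<And>t w. norm (\<Phi> (\<chi> j. complex_of_real (t $ j) - w j))
     \<le> C * (\<Prod>j\<in>UNIV. exp (- a $ j * (t $ j - Re (w j))\<^sup>2) * exp (b $ j * (Im (w j))\<^sup>2))"
    using O_ab_bound[OF assms] by blast
  have "norm (psi \<Phi> g \<sigma> t W) \<le> norm (g t) * C * (\<Prod>j\<in>UNIV. exp (ex a b \<sigma> t W j))" for t W
  proof -
    have "norm (psi \<Phi> g \<sigma> t W) = norm (g t) * (norm (\<Phi> (\<chi> j. complex_of_real (t $ j) - W $ Inl j)) *
        (\<Prod>j\<in>UNIV. exp (- (2 * pi * \<sigma> * Im (W $ Inr j) * t $ j))))"
      by (simp only: psi_def norm_mult norm_exp_part)
    also have "\<dots> \<le> norm (g t) * ((C * (\<Prod>j\<in>UNIV. exp (- a $ j * (t $ j - Re (W $ Inl j))\<^sup>2) * exp (b $ j * (Im (W $ Inl j))\<^sup>2))) *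
        (\<Prod>j\<in>UNIV. exp (- (2 * pi * \<sigma> * Im (W $ Inr j) * t $ j))))"
      by (intro mult_left_mono mult_right_mono C(2)) (auto intro: prod_nonneg)
    also have "\<dots> = norm (g t) * C * (\<Prod>j\<in>UNIV. exp (- a $ j * (t $ j - Re (W $ Inl j))\<^sup>2) * exp (b $ j * (Im (W $ Inl j))\<^sup>2) *
        exp (- (2 * pi * \<sigma> * Im (W $ Inr j) * t $ j)))"
      by (simp add: prod.distrib)
    also have "\<dots> = norm (g t) * C * (\<Prod>j\<in>UNIV. exp (ex a b \<sigma> t W j))"
      by (simp only: ex_def exp3)
    finally show ?thesis .
  qed
  with C(1) show ?thesis using that by blast
qed

lemma cont_meas_leb:
  fixes f :: "real^'d::finite \<Rightarrow> 'b::{banach, second_countable_topology}"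
  assumes "continuous_on UNIV f"
  shows "f \<in> borel_measurable lebesgue"
  using borel_measurable_continuous_onI[OF assms] by (intro measurable_completion) simp

lemma gauss_integrable_leb:
  fixes \<alpha> p :: "'d::finite \<Rightarrow> real"
  assumes a: "\<And>j. 0 < \<alpha> j"
  shows "integrable lebesgue (\<lambda>t::real^'d. \<Prod>j\<in>UNIV. exp (- \<alpha> j * (t $ j - p j)\<^sup>2 + \<beta> j * t $ j))"
proof -
  have c: "continuous_on UNIV (\<lambda>t::real^'d. \<Prod>j\<in>UNIV. exp (- \<alpha> j * (t $ j - p j)\<^sup>2 + \<beta> j * t $ j))"
    by (intro continuous_intros linear_continuous_on bounded_linear_vec_nth)
  have m: "(\<lambda>t::real^'d. \<Prod>j\<in>UNIV. exp (- \<alpha> j * (t $ j - p j)\<^sup>2 + \<beta> j * t $ j)) \<in> borel_measurable lborel"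
    using borel_measurable_continuous_onI[OF c] by simp
  have "integrable lborel (\<lambda>t::real^'d. \<Prod>j\<in>UNIV. exp (- \<alpha> j * (t $ j - p j)\<^sup>2 + \<beta> j * t $ j))"
    by (rule integrableI_nn_integral_finite[OF m _ nn_integral_gauss_prod[OF a]]) (simp add: prod_nonneg)
  then show ?thesis using m by (simp add: integrable_completion)
qed

lemma gauss_integrable_leb0:
  fixes \<alpha> p :: "'d::finite \<Rightarrow> real"
  assumes a: "\<And>j. 0 < \<alpha> j"
  shows "integrable lebesgue (\<lambda>t::real^'d. \<Prod>j\<in>UNIV. exp (- \<alpha> j * (t $ j - p j)\<^sup>2))"
  using gauss_integrable_leb[OF a, where p=p and \<beta>="\<lambda>j. 0"] by simp

lemma absprod_le: "\<bar>(A::real) * B\<bar> \<le> A\<^sup>2 + B\<^sup>2"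
proof -
  have "0 \<le> (\<bar>A\<bar> - \<bar>B\<bar>)\<^sup>2" by simp
  then have "2 * (\<bar>A\<bar> * \<bar>B\<bar>) \<le> A\<^sup>2 + B\<^sup>2" by (simp add: power2_eq_square algebra_simps)
  moreover have "0 \<le> \<bar>A\<bar> * \<bar>B\<bar>" by simp
  moreover have "\<bar>A * B\<bar> = \<bar>A\<bar> * \<bar>B\<bar>" by (simp add: abs_mult)
  ultimately show ?thesis by linarith
qed

lemma integrable_mult_L2:
  fixes g :: "real^'d::finite \<Rightarrow> complex"
  assumes g: "g \<in> borel_measurable lebesgue" "integrable lebesgue (\<lambda>t. (norm (g t))\<^sup>2)"
    and h: "h \<in> borel_measurable lebesgue" "integrable lebesgue (\<lambda>t. (h t)\<^sup>2)"
  shows "integrable lebesgue (\<lambda>t. norm (g t) * h t)"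
proof (rule Bochner_Integration.integrable_bound[where f="\<lambda>t. (norm (g t))\<^sup>2 + (h t)\<^sup>2"])
  show "integrable lebesgue (\<lambda>t. (norm (g t))\<^sup>2 + (h t)\<^sup>2)" using g(2) h(2) by (rule Bochner_Integration.integrable_add)
  show "(\<lambda>t. norm (g t) * h t) \<in> borel_measurable lebesgue"
    using g(1) h(1) by measurable
  show "AE t in lebesgue. norm (norm (g t) * h t) \<le> norm ((norm (g t))\<^sup>2 + (h t)\<^sup>2)"
    using absprod_le by (intro AE_I2) simp
qed

definition Eint :: "(complex^('d::finite) \<Rightarrow> complex) \<Rightarrow> (real^'d \<Rightarrow> complex) \<Rightarrow> real \<Rightarrow> complex^('d+'d) \<Rightarrow> complex" where
  "Eint \<Phi> g \<sigma> Z = (\<integral>t. psi \<Phi> g \<sigma> t Z \<partial>lebesgue)"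

lemma psi_dom:
  fixes \<Phi> :: "complex^('d::finite) \<Rightarrow> complex" and Z :: "complex^('d+'d)"
  assumes a: "\<And>j. 0 < a $ j" and b: "\<And>j. 0 < b $ j" and \<Phi>: "\<Phi> \<in> O_ab a b" and g: "g \<in> L2"
  shows "\<exists>G. integrable lebesgue G \<and> (\<forall>t\<in>space lebesgue. \<forall>W. norm (W - Z) \<le> 2 \<longrightarrow> norm (psi \<Phi> g \<sigma> t W) \<le> G t)"
proof -
  obtain C where C: "C > 0" "\<And>t W. norm (psi \<Phi> g \<sigma> t W) \<le> norm (g t) * C * (\<Prod>j\<in>UNIV. exp (ex a b \<sigma> t W j))"
    using psi_bound[OF \<Phi>] by blast
  define x where "x j = Re (Z $ Inl j)" for j
  define y where "y j = Im (Z $ Inl j)" for j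
  define \<eta> where "\<eta> j = Im (Z $ Inr j)" for j
  define K where "K j = 4 * a $ j + b $ j * (\<bar>y j\<bar> + 2)\<^sup>2 + 2 * pi * \<bar>\<sigma>\<bar> * (\<bar>\<eta> j\<bar> + 2) * \<bar>x j\<bar>
         + (2 * pi * \<bar>\<sigma>\<bar> * (\<bar>\<eta> j\<bar> + 2))\<^sup>2 / a $ j" for j
  define h where "h t = (\<Prod>j\<in>UNIV. exp (- (a $ j / 4) * (t $ j - x j)\<^sup>2))" for t :: "real^'d"
  define G where "G t = (C * (\<Prod>j\<in>UNIV. exp (K j))) * (norm (g t) * h t)" for t
  have bound: "norm (psi \<Phi> g \<sigma> t W) \<le> G t" if W: "norm (W - Z) \<le> 2" for t W
  proof -
    have cb: "cmod (W $ k - Z $ k) \<le> 2" for k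
      using Finite_Cartesian_Product.norm_nth_le[of "W - Z" k] W by simp
    have ex: "ex a b \<sigma> t W j \<le> K j + (- (a $ j / 4) * (t $ j - x j)\<^sup>2)" for j
    proof -
      have r: "\<bar>Re (W $ Inl j) - x j\<bar> \<le> 2"
        using abs_Re_le_cmod[of "W $ Inl j - Z $ Inl j"] cb[of "Inl j"] by (simp add: x_def)
      have y': "\<bar>Im (W $ Inl j) - y j\<bar> \<le> 2"
        using abs_Im_le_cmod[of "W $ Inl j - Z $ Inl j"] cb[of "Inl j"] by (simp add: y_def)
      have e': "\<bar>Im (W $ Inr j) - \<eta> j\<bar> \<le> 2"
        using abs_Im_le_cmod[of "W $ Inr j - Z $ Inr j"] cb[of "Inr j"] by (simp add: \<eta>_def)
      have "ex a b \<sigma> t W j \<le> - (a $ j / 4) * (t $ j - x j)\<^sup>2 + K j"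
        unfolding ex_def K_def
        by (rule coord_dom[OF a less_imp_le[OF b] r y' e'])
      then show ?thesis by simp
    qed
    have "norm (psi \<Phi> g \<sigma> t W) \<le> norm (g t) * C * (\<Prod>j\<in>UNIV. exp (ex a b \<sigma> t W j))" by (rule C(2))
    also have "\<dots> \<le> norm (g t) * C * (\<Prod>j\<in>UNIV. exp (K j) * exp (- (a $ j / 4) * (t $ j - x j)\<^sup>2))"
      using C(1) ex by (intro mult_left_mono prod_mono) (auto simp: exp_add[symmetric])
    also have "\<dots> = G t"
      by (simp add: G_def h_def prod.distrib)
    finally show ?thesis .
  qed
  have hc: "continuous_on UNIV h"
    unfolding h_def[abs_def] by (intro continuous_intros linear_continuous_on bounded_linear_vec_nth)
  have h2: "(h t)\<^sup>2 = (\<Prod>j\<in>UNIV. exp (- (a $ j / 2) * (t $ j - x j)\<^sup>2))" for t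
  proof -
    have "(h t)\<^sup>2 = (\<Prod>j\<in>UNIV. exp (- (a $ j / 4) * (t $ j - x j)\<^sup>2) * exp (- (a $ j / 4) * (t $ j - x j)\<^sup>2))"
      by (simp add: h_def power2_eq_square prod.distrib)
    also have "\<dots> = (\<Prod>j\<in>UNIV. exp (- (a $ j / 2) * (t $ j - x j)\<^sup>2))"
    proof (rule prod.cong[OF refl])
      fix j
      have "- (a $ j / 4) * (t $ j - x j)\<^sup>2 + - (a $ j / 4) * (t $ j - x j)\<^sup>2 = - (a $ j / 2) * (t $ j - x j)\<^sup>2"
        by (simp add: field_simps)
      then show "exp (- (a $ j / 4) * (t $ j - x j)\<^sup>2) * exp (- (a $ j / 4) * (t $ j - x j)\<^sup>2) = exp (- (a $ j / 2) * (t $ j - x j)\<^sup>2)"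
        by (simp only: exp_add[symmetric])
    qed
    finally show ?thesis .
  qed
  have hint: "integrable lebesgue (\<lambda>t. (h t)\<^sup>2)"
    unfolding h2 using a by (intro gauss_integrable_leb0) simp
  have gL: "g \<in> borel_measurable lebesgue" "integrable lebesgue (\<lambda>t. (norm (g t))\<^sup>2)"
    using g by (auto simp: L2_def)
  have "integrable lebesgue (\<lambda>t. norm (g t) * h t)"
    by (rule integrable_mult_L2[OF gL cont_meas_leb[OF hc] hint])
  then have "integrable lebesgue G"
    unfolding G_def by (rule Bochner_Integration.integrable_mult_right)
  then show ?thesis using bound by blast
qed

lemma O_ab_entire: "\<Phi> \<in> O_ab a b \<Longrightarrow> entire_vec \<Phi>"
  by (simp add: O_ab_def)

lemma Eint_entire:
  fixes \<Phi> :: "complex^('d::finite) \<Rightarrow> complex"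
  assumes a: "\<And>j. 0 < a $ j" and b: "\<And>j. 0 < b $ j" and \<Phi>: "\<Phi> \<in> O_ab a b" and g: "g \<in> L2"
  shows "entire_vec (Eint \<Phi> g \<sigma>)"
proof -
  have gm: "g \<in> borel_measurable lebesgue" using g by (simp add: L2_def)
  have "entire_vec (\<lambda>Z. \<integral>t. psi \<Phi> g \<sigma> t Z \<partial>lebesgue)"
    by (rule entire_param_integral[OF entire_vec_psi[OF O_ab_entire[OF \<Phi>]] psi_meas[OF gm O_ab_entire[OF \<Phi>]]
          psi_dom[OF a b \<Phi> g]])
  then show ?thesis by (simp add: Eint_def[abs_def])
qed

lemma expsq: "(exp (u::real))\<^sup>2 = exp (2 * u)"
proof -
  have "exp (2 * u) = exp (u + u)" by (simp only: mult_2)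
  also have "\<dots> = exp u * exp u" by (rule exp_add)
  finally show ?thesis by (simp only: power2_eq_square)
qed

lemma psi_integrable:
  fixes \<Phi> :: "complex^('d::finite) \<Rightarrow> complex" and Z :: "complex^('d+'d)"
  assumes a: "\<And>j. 0 < a $ j" and b: "\<And>j. 0 < b $ j" and \<Phi>: "\<Phi> \<in> O_ab a b" and g: "g \<in> L2"
  shows "integrable lebesgue (\<lambda>t. psi \<Phi> g \<sigma> t Z)"
proof -
  obtain G where G1: "integrable lebesgue G" and G2: "\<forall>t\<in>space lebesgue. \<forall>W. norm (W - Z) \<le> 2 \<longrightarrow> norm (psi \<Phi> g \<sigma> t W) \<le> G t"
    using psi_dom[OF a b \<Phi> g, of Z \<sigma>] by blast
  have G: "integrable lebesgue G" "\<And>t W. norm (W - Z) \<le> 2 \<Longrightarrow> norm (psi \<Phi> g \<sigma> t W) \<le> G t"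
    using G1 G2 by auto
  have gm: "g \<in> borel_measurable lebesgue" using g by (simp add: L2_def)
  show ?thesis
  proof (rule Bochner_Integration.integrable_bound[OF G(1) psi_meas[OF gm O_ab_entire[OF \<Phi>]]])
    show "AE t in lebesgue. norm (psi \<Phi> g \<sigma> t Z) \<le> norm (G t)"
    proof (intro AE_I2)
      fix t
      have "norm (psi \<Phi> g \<sigma> t Z) \<le> G t" using G(2)[of Z t] by simp
      then show "norm (psi \<Phi> g \<sigma> t Z) \<le> norm (G t)" by simp
    qed
  qed
qed

definition gx :: "real^'d \<Rightarrow> real^'d \<Rightarrow> real \<Rightarrow> complex^('d+'d) \<Rightarrow> 'd \<Rightarrow> real" where
  "gx a b \<sigma> Z j = 2 * b $ j * (Im (Z $ Inl j))\<^sup>2 + 2 * pi\<^sup>2 * \<sigma>\<^sup>2 * (Im (Z $ Inr j))\<^sup>2 / a $ j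
     - 4 * pi * \<sigma> * Im (Z $ Inr j) * Re (Z $ Inl j)"

lemma Eint_growth:
  fixes \<Phi> :: "complex^('d::finite) \<Rightarrow> complex"
  assumes a: "\<And>j. 0 < a $ j" and b: "\<And>j. 0 < b $ j" and \<Phi>: "\<Phi> \<in> O_ab a b" and g: "g \<in> L2"
  shows "\<exists>K. \<forall>Z. (norm (Eint \<Phi> g \<sigma> Z))\<^sup>2 \<le> K * (\<Prod>j\<in>UNIV. exp (gx a b \<sigma> Z j))"
proof -
  obtain C where C: "C > 0" "\<And>t W. norm (psi \<Phi> g \<sigma> t W) \<le> norm (g t) * C * (\<Prod>j\<in>UNIV. exp (ex a b \<sigma> t W j))"
    using psi_bound[OF \<Phi>] by blast
  have gm[measurable]: "g \<in> borel_measurable lebesgue" using g by (simp add: L2_def)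
  have gi: "integrable lebesgue (\<lambda>t. (norm (g t))\<^sup>2)" using g by (simp add: L2_def)
  define N2 where "N2 = (\<integral>t. (norm (g t))\<^sup>2 \<partial>lebesgue)"
  have N20: "0 \<le> N2" unfolding N2_def by (rule Bochner_Integration.integral_nonneg) simp
  define P where "P = (\<Prod>j\<in>UNIV. gc (2 * a $ j))"
  have P0: "0 \<le> P" unfolding P_def by (intro prod_nonneg) (simp add: gc_nonneg)
  show ?thesis
  proof (intro exI allI)
    fix Z :: "complex^('d+'d)"
    define x where "x j = Re (Z $ Inl j)" for j
    define y where "y j = Im (Z $ Inl j)" for j
    define \<eta> where "\<eta> j = Im (Z $ Inr j)" for j
    define \<beta> where "\<beta> j = - (4 * pi * \<sigma> * \<eta> j)" for j
    define B where "B = (\<Prod>j\<in>UNIV. exp (b $ j * (y j)\<^sup>2))"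
    define Q where "Q t = (\<Prod>j\<in>UNIV. exp (- a $ j * (t $ j - x j)\<^sup>2 + (- 2 * pi * \<sigma> * \<eta> j) * t $ j))" for t :: "real^'d"
    define R where "R = (\<Prod>j\<in>UNIV. exp (\<beta> j * x j + (\<beta> j)\<^sup>2 / (4 * (2 * a $ j))) * gc (2 * a $ j))"
    have B0: "0 \<le> B" unfolding B_def by (intro prod_nonneg) simp
    have Q0: "0 \<le> Q t" for t unfolding Q_def by (intro prod_nonneg) simp
    have R0: "0 \<le> R" unfolding R_def by (intro prod_nonneg) (simp add: gc_nonneg)
    have Qc: "continuous_on UNIV Q"
      unfolding Q_def[abs_def] by (intro continuous_intros linear_continuous_on bounded_linear_vec_nth)
    have Qm[measurable]: "Q \<in> borel_measurable lebesgue" by (rule cont_meas_leb[OF Qc])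
    have pb: "norm (psi \<Phi> g \<sigma> t Z) \<le> (C * B) * (norm (g t) * Q t)" for t
    proof -
      have "(\<Prod>j\<in>UNIV. exp (ex a b \<sigma> t Z j)) = (\<Prod>j\<in>UNIV. exp (b $ j * (y j)\<^sup>2) *
             exp (- a $ j * (t $ j - x j)\<^sup>2 + (- 2 * pi * \<sigma> * \<eta> j) * t $ j))"
      proof (rule prod.cong[OF refl])
        fix j
        have "ex a b \<sigma> t Z j = b $ j * (y j)\<^sup>2 + (- a $ j * (t $ j - x j)\<^sup>2 + (- 2 * pi * \<sigma> * \<eta> j) * t $ j)"
          by (simp add: ex_def x_def y_def \<eta>_def algebra_simps)
        then show "exp (ex a b \<sigma> t Z j) = exp (b $ j * (y j)\<^sup>2) *
             exp (- a $ j * (t $ j - x j)\<^sup>2 + (- 2 * pi * \<sigma> * \<eta> j) * t $ j)"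
          by (simp only: exp_add)
      qed
      also have "\<dots> = B * Q t" by (simp add: B_def Q_def prod.distrib)
      finally have "(\<Prod>j\<in>UNIV. exp (ex a b \<sigma> t Z j)) = B * Q t" .
      with C(2)[of t Z] show ?thesis by (simp add: algebra_simps)
    qed
    have e1: "ennreal (norm (Eint \<Phi> g \<sigma> Z)) \<le> (\<integral>\<^sup>+t. ennreal (norm (psi \<Phi> g \<sigma> t Z)) \<partial>lebesgue)"
      unfolding Eint_def by (rule integral_norm_bound_ennreal[OF psi_integrable[OF a b \<Phi> g]])
    have e2: "(\<integral>\<^sup>+t. ennreal (norm (psi \<Phi> g \<sigma> t Z)) \<partial>lebesgue)
        \<le> ennreal (C * B) * (\<integral>\<^sup>+t. ennreal (norm (g t)) * ennreal (Q t) \<partial>lebesgue)"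
    proof -
      have "(\<integral>\<^sup>+t. ennreal (norm (psi \<Phi> g \<sigma> t Z)) \<partial>lebesgue)
          \<le> (\<integral>\<^sup>+t. ennreal (C * B) * (ennreal (norm (g t)) * ennreal (Q t)) \<partial>lebesgue)"
      proof (rule nn_integral_mono)
        fix t
        have "ennreal (norm (psi \<Phi> g \<sigma> t Z)) \<le> ennreal ((C * B) * (norm (g t) * Q t))"
          by (rule ennreal_leI[OF pb])
        also have "\<dots> = ennreal (C * B) * (ennreal (norm (g t)) * ennreal (Q t))"
          using C(1) B0 Q0[of t] by (simp add: ennreal_mult)
        finally show "ennreal (norm (psi \<Phi> g \<sigma> t Z)) \<le> ennreal (C * B) * (ennreal (norm (g t)) * ennreal (Q t))" .
      qed
      also have "\<dots> = ennreal (C * B) * (\<integral>\<^sup>+t. ennreal (norm (g t)) * ennreal (Q t) \<partial>lebesgue)"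
        by (rule nn_integral_cmult) measurable
      finally show ?thesis .
    qed
    have cs: "(\<integral>\<^sup>+t. ennreal (norm (g t)) * ennreal (Q t) \<partial>lebesgue)\<^sup>2
        \<le> (\<integral>\<^sup>+t. ennreal (norm (g t)) ^ 2 \<partial>lebesgue) * (\<integral>\<^sup>+t. ennreal (Q t) ^ 2 \<partial>lebesgue)"
      by (rule Cauchy_Schwarz_nn_integral) measurable
    have n2: "(\<integral>\<^sup>+t. ennreal (norm (g t)) ^ 2 \<partial>lebesgue) = ennreal N2"
    proof -
      have "(\<integral>\<^sup>+t. ennreal (norm (g t)) ^ 2 \<partial>lebesgue) = (\<integral>\<^sup>+t. ennreal ((norm (g t))\<^sup>2) \<partial>lebesgue)"
        by (simp add: ennreal_power)
      also have "\<dots> = ennreal N2"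
        unfolding N2_def by (rule nn_integral_eq_integral[OF gi]) simp
      finally show ?thesis .
    qed
    have q2: "(\<integral>\<^sup>+t. ennreal (Q t) ^ 2 \<partial>lebesgue) = ennreal R"
    proof -
      have sq: "(Q t)\<^sup>2 = (\<Prod>j\<in>UNIV. exp (- (2 * a $ j) * (t $ j - x j)\<^sup>2 + \<beta> j * t $ j))" for t
      proof -
        have "(Q t)\<^sup>2 = (\<Prod>j\<in>UNIV. (exp (- a $ j * (t $ j - x j)\<^sup>2 + (- 2 * pi * \<sigma> * \<eta> j) * t $ j))\<^sup>2)"
          by (simp add: Q_def prod_power_distrib)
        also have "\<dots> = (\<Prod>j\<in>UNIV. exp (- (2 * a $ j) * (t $ j - x j)\<^sup>2 + \<beta> j * t $ j))"
        proof (rule prod.cong[OF refl])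
          fix j
          have "2 * (- a $ j * (t $ j - x j)\<^sup>2 + (- 2 * pi * \<sigma> * \<eta> j) * t $ j) = - (2 * a $ j) * (t $ j - x j)\<^sup>2 + \<beta> j * t $ j"
            by (simp add: \<beta>_def algebra_simps)
          then show "(exp (- a $ j * (t $ j - x j)\<^sup>2 + (- 2 * pi * \<sigma> * \<eta> j) * t $ j))\<^sup>2 = exp (- (2 * a $ j) * (t $ j - x j)\<^sup>2 + \<beta> j * t $ j)"
            by (simp only: expsq)
        qed
        finally show ?thesis .
      qed
      have "(\<integral>\<^sup>+t. ennreal (Q t) ^ 2 \<partial>lebesgue) = (\<integral>\<^sup>+t. ennreal ((Q t)\<^sup>2) \<partial>lebesgue)"
        using Q0 by (simp add: ennreal_power)
      also have "\<dots> = (\<integral>\<^sup>+t. ennreal (\<Prod>j\<in>UNIV. exp (- (2 * a $ j) * (t $ j - x j)\<^sup>2 + \<beta> j * t $ j)) \<partial>lborel)"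
        unfolding sq by (rule nn_integral_completion)
      also have "\<dots> = ennreal R"
        unfolding R_def by (rule nn_integral_gauss_prod) (simp add: a)
      finally show ?thesis .
    qed
    have "ennreal ((norm (Eint \<Phi> g \<sigma> Z))\<^sup>2) = (ennreal (norm (Eint \<Phi> g \<sigma> Z)))\<^sup>2"
      by (simp add: ennreal_power)
    also have "\<dots> \<le> (ennreal (C * B) * (\<integral>\<^sup>+t. ennreal (norm (g t)) * ennreal (Q t) \<partial>lebesgue))\<^sup>2"
      using order_trans[OF e1 e2] by (intro power_mono) auto
    also have "\<dots> = (ennreal (C * B))\<^sup>2 * (\<integral>\<^sup>+t. ennreal (norm (g t)) * ennreal (Q t) \<partial>lebesgue)\<^sup>2"
      by (simp add: power_mult_distrib)
    also have "\<dots> \<le> (ennreal (C * B))\<^sup>2 * (ennreal N2 * ennreal R)"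
      using cs unfolding n2 q2 by (intro mult_left_mono) auto
    also have "\<dots> = ennreal ((C * B)\<^sup>2) * ennreal (N2 * R)"
    proof -
      have CB0: "0 \<le> C * B" using C(1) B0 by simp
      show ?thesis by (simp only: ennreal_power[OF CB0] ennreal_mult[OF N20 R0])
    qed
    also have "\<dots> = ennreal ((C * B)\<^sup>2 * (N2 * R))"
      using N20 R0 by (intro ennreal_mult[symmetric]) auto
    finally have main: "(norm (Eint \<Phi> g \<sigma> Z))\<^sup>2 \<le> (C * B)\<^sup>2 * (N2 * R)"
      using C(1) B0 N20 R0 by (subst (asm) ennreal_le_iff) auto
    have B2: "B\<^sup>2 = (\<Prod>j\<in>UNIV. exp (2 * (b $ j * (y j)\<^sup>2)))"
      by (simp add: B_def prod_power_distrib expsq)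
    have R2: "R = (\<Prod>j\<in>UNIV. exp (\<beta> j * x j + (\<beta> j)\<^sup>2 / (4 * (2 * a $ j)))) * P"
      by (simp add: R_def P_def prod.distrib)
    have "(C * B)\<^sup>2 * (N2 * R) = (C\<^sup>2 * N2 * P) * (\<Prod>j\<in>UNIV. exp (2 * (b $ j * (y j)\<^sup>2)) * exp (\<beta> j * x j + (\<beta> j)\<^sup>2 / (4 * (2 * a $ j))))"
      by (simp add: B2 R2 power_mult_distrib prod.distrib algebra_simps)
    also have "(\<Prod>j\<in>UNIV. exp (2 * (b $ j * (y j)\<^sup>2)) * exp (\<beta> j * x j + (\<beta> j)\<^sup>2 / (4 * (2 * a $ j))))
        = (\<Prod>j\<in>UNIV. exp (gx a b \<sigma> Z j))"
    proof (rule prod.cong[OF refl])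
      fix j
      have aj: "a $ j \<noteq> 0" using a[of j] by simp
      have "2 * (b $ j * (y j)\<^sup>2) + (\<beta> j * x j + (\<beta> j)\<^sup>2 / (4 * (2 * a $ j))) = gx a b \<sigma> Z j"
        using aj by (simp add: gx_def \<beta>_def x_def y_def \<eta>_def power2_eq_square field_simps)
      then show "exp (2 * (b $ j * (y j)\<^sup>2)) * exp (\<beta> j * x j + (\<beta> j)\<^sup>2 / (4 * (2 * a $ j))) = exp (gx a b \<sigma> Z j)"
        by (simp only: exp_add[symmetric])
    qed
    finally have eq: "(C * B)\<^sup>2 * (N2 * R) = (C\<^sup>2 * N2 * P) * (\<Prod>j\<in>UNIV. exp (gx a b \<sigma> Z j))" .
    show "(norm (Eint \<Phi> g \<sigma> Z))\<^sup>2 \<le> (C\<^sup>2 * N2 * P) * (\<Prod>j\<in>UNIV. exp (gx a b \<sigma> Z j))"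
      by (rule ord_le_eq_trans[OF main eq])
  qed
qed

definition conjfun :: "(complex^('d::finite) \<Rightarrow> complex) \<Rightarrow> complex^'d \<Rightarrow> complex" where
  "conjfun \<Phi> u = cnj (\<Phi> (\<chi> j. cnj (u $ j)))"

lemma conjfun_O_ab:
  fixes \<Phi> :: "complex^('d::finite) \<Rightarrow> complex"
  assumes "\<Phi> \<in> O_ab a b"
  shows "conjfun \<Phi> \<in> O_ab a b"
proof -
  have ent: "entire_vec \<Phi>" using assms by (simp add: O_ab_def)
  obtain L where L: "\<And>z. (\<Phi> has_derivative L z) (at z)" "\<And>z c v. L z (\<chi> k. c * v $ k) = c * L z v"
    using entire_vec_choose[OF ent] by blast
  define cv where "cv u = (\<chi> j. cnj (u $ j))" for u :: "complex^'d"
  have lcv: "bounded_linear cv"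
  proof -
    have "linear cv" by (rule linearI) (simp_all add: cv_def vec_eq_iff)
    then show ?thesis by (simp add: linear_conv_bounded_linear)
  qed
  have "entire_vec (conjfun \<Phi>)"
  proof (rule entire_vecI[where L="\<lambda>z v. cnj (L (cv z) (cv v))"])
    fix z
    have "((\<lambda>z. \<Phi> (cv z)) has_derivative (\<lambda>v. L (cv z) (cv v))) (at z)"
      by (rule has_derivative_compose[OF bounded_linear_imp_has_derivative[OF lcv] L(1)])
    then have "((\<lambda>z. cnj (\<Phi> (cv z))) has_derivative (\<lambda>v. cnj (L (cv z) (cv v)))) (at z)"
      by (rule bounded_linear.has_derivative[OF bounded_linear_cnj])
    then show "(conjfun \<Phi> has_derivative (\<lambda>v. cnj (L (cv z) (cv v)))) (at z)"
      by (simp add: conjfun_def[abs_def] cv_def)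
  next
    fix z c v
    have "cv (\<chi> k. c * v $ k) = (\<chi> k. cnj c * (cv v) $ k)" by (simp add: cv_def vec_eq_iff)
    then show "cnj (L (cv z) (cv (\<chi> k. c * v $ k))) = c * cnj (L (cv z) (cv v))"
      by (simp add: L(2))
  qed
  moreover obtain C where C: "C > 0" "\<And>x y. norm (\<Phi> (cplx_pt x y)) \<le> C * (\<Prod>j\<in>UNIV. exp (- a $ j * (x $ j)\<^sup>2) * exp (b $ j * (y $ j)\<^sup>2))"
    using assms unfolding O_ab_def by blast
  moreover have "norm (conjfun \<Phi> (cplx_pt x y)) \<le> C * (\<Prod>j\<in>UNIV. exp (- a $ j * (x $ j)\<^sup>2) * exp (b $ j * (y $ j)\<^sup>2))" for x y
  proof -
    have "(\<chi> j. cnj (cplx_pt x y $ j)) = cplx_pt x (- y)"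
      by (simp add: cplx_pt_def vec_eq_iff complex_eq_iff)
    then have "norm (conjfun \<Phi> (cplx_pt x y)) = norm (\<Phi> (cplx_pt x (- y)))"
      by (simp add: conjfun_def)
    also have "\<dots> \<le> C * (\<Prod>j\<in>UNIV. exp (- a $ j * (x $ j)\<^sup>2) * exp (b $ j * (y $ j)\<^sup>2))"
      using C(2)[of x "- y"] by simp
    finally show ?thesis .
  qed
  ultimately show ?thesis unfolding O_ab_def by blast
qed

lemma cnj_L2:
  assumes "f \<in> L2" shows "(\<lambda>t. cnj (f t)) \<in> L2"
proof -
  have f: "f \<in> borel_measurable lebesgue" "integrable lebesgue (\<lambda>t. (norm (f t))\<^sup>2)"
    using assms by (auto simp: L2_def)
  have c: "cnj \<in> borel_measurable borel"
    by (intro borel_measurable_continuous_onI continuous_intros)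
  have "(\<lambda>t. cnj (f t)) \<in> borel_measurable lebesgue"
    using measurable_compose[OF f(1) c] by (simp add: comp_def)
  then show ?thesis using f(2) by (simp add: L2_def)
qed

lemma inner_of_real:
  fixes \<omega> t :: "real^'d::finite"
  shows "complex_of_real (\<omega> \<bullet> t) = (\<Sum>j\<in>UNIV. complex_of_real (\<omega> $ j) * complex_of_real (t $ j))"
  by (simp add: inner_vec_def)

lemma Eint_stft1:
  fixes \<phi> :: "complex^('d::finite) \<Rightarrow> complex"
  shows "Eint (conjfun \<phi>) f (-1) (pair_pt x \<omega>) = stft (restr_R \<phi>) f x \<omega>"
  unfolding Eint_def stft_def
proof (rule Bochner_Integration.integral_cong[OF refl])
  fix t :: "real^'d"
  have v: "(\<chi> j. cnj (complex_of_real (t $ j) - pair_pt x \<omega> $ Inl j)) = (\<chi> j. complex_of_real ((t - x) $ j))"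
    by (simp add: vec_eq_iff pair_pt_def)
  have e: "exp (\<i> * complex_of_real (2 * pi * - 1) * (\<Sum>j\<in>UNIV. pair_pt x \<omega> $ Inr j * complex_of_real (t $ j)))
      = cis (- 2 * pi * (\<omega> \<bullet> t))"
  proof -
    have "\<i> * complex_of_real (2 * pi * - 1) * (\<Sum>j\<in>UNIV. pair_pt x \<omega> $ Inr j * complex_of_real (t $ j))
        = \<i> * complex_of_real (- 2 * pi * (\<omega> \<bullet> t))"
      by (simp add: pair_pt_def inner_of_real)
    then show ?thesis by (simp add: cis_conv_exp mult.assoc)
  qed
  show "psi (conjfun \<phi>) f (- 1) t (pair_pt x \<omega>) = f t * cnj (restr_R \<phi> (t - x)) * cis (- 2 * pi * (\<omega> \<bullet> t))"
    unfolding psi_def conjfun_def e by (simp add: restr_R_def pair_pt_def)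
qed

lemma Eint_stft2:
  fixes \<phi> :: "complex^('d::finite) \<Rightarrow> complex"
  shows "Eint \<phi> (\<lambda>t. cnj (f t)) 1 (pair_pt x \<omega>) = cnj (stft (restr_R \<phi>) f x \<omega>)"
  unfolding Eint_def stft_def Bochner_Integration.integral_cnj[symmetric]
proof (rule Bochner_Integration.integral_cong[OF refl])
  fix t :: "real^'d"
  have v: "(\<chi> j. complex_of_real (t $ j) - pair_pt x \<omega> $ Inl j) = (\<chi> j. complex_of_real ((t - x) $ j))"
    by (simp add: vec_eq_iff pair_pt_def)
  have e: "exp (\<i> * complex_of_real (2 * pi * 1) * (\<Sum>j\<in>UNIV. pair_pt x \<omega> $ Inr j * complex_of_real (t $ j)))
      = cnj (cis (- 2 * pi * (\<omega> \<bullet> t)))"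
  proof -
    have "\<i> * complex_of_real (2 * pi * 1) * (\<Sum>j\<in>UNIV. pair_pt x \<omega> $ Inr j * complex_of_real (t $ j))
        = \<i> * complex_of_real (- (- 2 * pi * (\<omega> \<bullet> t)))"
      by (simp add: pair_pt_def inner_of_real)
    then show ?thesis by (simp only: cis_cnj) (simp add: cis_conv_exp mult.assoc)
  qed
  show "psi \<phi> (\<lambda>t. cnj (f t)) 1 t (pair_pt x \<omega>) = cnj (f t * cnj (restr_R \<phi> (t - x)) * cis (- 2 * pi * (\<omega> \<bullet> t)))"
    unfolding psi_def v e by (simp add: restr_R_def)
qed

lemma sq_le_cmod_sq: "(Im z)\<^sup>2 \<le> (cmod z)\<^sup>2"
proof -
  have "\<bar>Im z\<bar>\<^sup>2 \<le> (cmod z)\<^sup>2" by (intro power_mono abs_Im_le_cmod) auto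
  then show ?thesis by simp
qed

theorem lemma3p4:
  fixes a b :: "real ^ 'd" and \<phi> :: "complex ^ 'd \<Rightarrow> complex"
  assumes "\<forall>j. a $ j > 0" and "\<forall>j. b $ j > 0"
    and "\<phi> \<in> O_ab a b"
  shows "\<forall>f \<in> L2. \<exists>F \<in> O_c (\<chi> k. case k of Inl j \<Rightarrow> 2 * b $ j
                                          | Inr j \<Rightarrow> 2 * pi\<^sup>2 / a $ j).
           \<forall>x \<omega>. F (pair_pt x \<omega>) = complex_of_real ((norm (stft (restr_R \<phi>) f x \<omega>))\<^sup>2)"
proof (intro ballI)
  fix f :: "real^'d \<Rightarrow> complex" assume f: "f \<in> L2"
  define c :: "real^('d+'d)" where "c = (\<chi> k. case k of Inl j \<Rightarrow> 2 * b $ j | Inr j \<Rightarrow> 2 * pi\<^sup>2 / a $ j)"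
  have a: "\<And>j. 0 < a $ j" using assms(1) by blast
  have b: "\<And>j. 0 < b $ j" using assms(2) by blast
  have \<Phi>1: "conjfun \<phi> \<in> O_ab a b" by (rule conjfun_O_ab[OF assms(3)])
  have f2: "(\<lambda>t. cnj (f t)) \<in> L2" by (rule cnj_L2[OF f])
  define E1 where "E1 = Eint (conjfun \<phi>) f (-1)"
  define E2 where "E2 = Eint \<phi> (\<lambda>t. cnj (f t)) 1"
  define F where "F Z = E1 Z * E2 Z" for Z
  have ent: "entire_vec F"
    unfolding F_def[abs_def] E1_def E2_def
    by (intro entire_vec_mult Eint_entire[OF a b \<Phi>1 f] Eint_entire[OF a b assms(3) f2])
  obtain K1 where K1: "\<And>Z. (norm (E1 Z))\<^sup>2 \<le> K1 * (\<Prod>j\<in>UNIV. exp (gx a b (-1) Z j))"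
    using Eint_growth[OF a b \<Phi>1 f, of "-1"] unfolding E1_def by blast
  obtain K2 where K2: "\<And>Z. (norm (E2 Z))\<^sup>2 \<le> K2 * (\<Prod>j\<in>UNIV. exp (gx a b 1 Z j))"
    using Eint_growth[OF a b assms(3) f2, of 1] unfolding E2_def by blast
  have K10: "0 \<le> K1"
  proof -
    have "0 \<le> K1 * (\<Prod>j\<in>UNIV. exp (gx a b (-1) 0 j))" using K1[of 0] order_trans[OF zero_le_power2] by blast
    moreover have "0 < (\<Prod>j\<in>UNIV. exp (gx a b (-1) 0 j))" by (intro prod_pos) simp
    ultimately show ?thesis by (simp add: zero_le_mult_iff)
  qed
  have K20: "0 \<le> K2"
  proof -
    have "0 \<le> K2 * (\<Prod>j\<in>UNIV. exp (gx a b 1 0 j))" using K2[of 0] order_trans[OF zero_le_power2] by blast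
    moreover have "0 < (\<Prod>j\<in>UNIV. exp (gx a b 1 0 j))" by (intro prod_pos) simp
    ultimately show ?thesis by (simp add: zero_le_mult_iff)
  qed
  define T where "T Z = (\<Prod>j\<in>UNIV. exp (2 * b $ j * (Im (Z $ Inl j))\<^sup>2 + 2 * pi\<^sup>2 * (Im (Z $ Inr j))\<^sup>2 / a $ j))" for Z :: "complex^('d+'d)"
  have T0: "0 \<le> T Z" for Z unfolding T_def by (intro prod_nonneg) simp
  have Fb: "norm (F Z) \<le> sqrt (K1 * K2) * T Z" for Z
  proof -
    have "(norm (F Z))\<^sup>2 = (norm (E1 Z))\<^sup>2 * (norm (E2 Z))\<^sup>2"
      by (simp add: F_def norm_mult power_mult_distrib)
    also have "\<dots> \<le> (K1 * (\<Prod>j\<in>UNIV. exp (gx a b (-1) Z j))) * (K2 * (\<Prod>j\<in>UNIV. exp (gx a b 1 Z j)))"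
      by (intro mult_mono K1 K2) (auto intro!: mult_nonneg_nonneg prod_nonneg simp: K10)
    also have "\<dots> = (K1 * K2) * (\<Prod>j\<in>UNIV. exp (gx a b (-1) Z j) * exp (gx a b 1 Z j))"
      by (simp add: prod.distrib)
    also have "(\<Prod>j\<in>UNIV. exp (gx a b (-1) Z j) * exp (gx a b 1 Z j)) = (T Z)\<^sup>2"
    proof -
      have "(T Z)\<^sup>2 = (\<Prod>j\<in>UNIV. exp (2 * (2 * b $ j * (Im (Z $ Inl j))\<^sup>2 + 2 * pi\<^sup>2 * (Im (Z $ Inr j))\<^sup>2 / a $ j)))"
        by (simp add: T_def prod_power_distrib expsq)
      also have "\<dots> = (\<Prod>j\<in>UNIV. exp (gx a b (-1) Z j) * exp (gx a b 1 Z j))"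
      proof (rule prod.cong[OF refl])
        fix j
        have "gx a b (-1) Z j + gx a b 1 Z j = 2 * (2 * b $ j * (Im (Z $ Inl j))\<^sup>2 + 2 * pi\<^sup>2 * (Im (Z $ Inr j))\<^sup>2 / a $ j)"
          by (simp add: gx_def algebra_simps)
        then show "exp (2 * (2 * b $ j * (Im (Z $ Inl j))\<^sup>2 + 2 * pi\<^sup>2 * (Im (Z $ Inr j))\<^sup>2 / a $ j)) =
            exp (gx a b (-1) Z j) * exp (gx a b 1 Z j)"
          by (simp only: exp_add[symmetric])
      qed
      finally show ?thesis by simp
    qed
    finally have "(norm (F Z))\<^sup>2 \<le> (K1 * K2) * (T Z)\<^sup>2" .
    then have "norm (F Z) \<le> sqrt ((K1 * K2) * (T Z)\<^sup>2)" by (rule real_le_rsqrt)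
    also have "\<dots> = sqrt (K1 * K2) * T Z" using T0[of Z] by (simp add: real_sqrt_mult)
    finally show ?thesis .
  qed
  have Tb: "T Z \<le> (\<Prod>k\<in>UNIV. exp (c $ k * (norm (Z $ k))\<^sup>2))" for Z
  proof -
    have "(\<Prod>k\<in>UNIV. exp (c $ k * (norm (Z $ k))\<^sup>2))
        = (\<Prod>k\<in>(UNIV::'d set) <+> (UNIV::'d set). exp (c $ k * (norm (Z $ k))\<^sup>2))"
      by simp
    also have "\<dots> = (\<Prod>j\<in>UNIV. exp (c $ Inl j * (norm (Z $ Inl j))\<^sup>2)) * (\<Prod>j\<in>UNIV. exp (c $ Inr j * (norm (Z $ Inr j))\<^sup>2))"
      by (subst prod.Plus) (simp_all add: comp_def)
    also have "\<dots> = (\<Prod>j\<in>UNIV. exp (2 * b $ j * (norm (Z $ Inl j))\<^sup>2) * exp (2 * pi\<^sup>2 / a $ j * (norm (Z $ Inr j))\<^sup>2))"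
      by (simp add: c_def prod.distrib)
    finally have R: "(\<Prod>k\<in>UNIV. exp (c $ k * (norm (Z $ k))\<^sup>2)) =
        (\<Prod>j\<in>UNIV. exp (2 * b $ j * (norm (Z $ Inl j))\<^sup>2) * exp (2 * pi\<^sup>2 / a $ j * (norm (Z $ Inr j))\<^sup>2))" .
    have "T Z = (\<Prod>j\<in>UNIV. exp (2 * b $ j * (Im (Z $ Inl j))\<^sup>2) * exp (2 * pi\<^sup>2 / a $ j * (Im (Z $ Inr j))\<^sup>2))"
      unfolding T_def by (intro prod.cong refl) (simp add: exp_add[symmetric])
    also have "\<dots> \<le> (\<Prod>j\<in>UNIV. exp (2 * b $ j * (norm (Z $ Inl j))\<^sup>2) * exp (2 * pi\<^sup>2 / a $ j * (norm (Z $ Inr j))\<^sup>2))"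
    proof (rule prod_mono, intro conjI)
      fix j
      have b0: "0 \<le> 2 * b $ j" using b[of j] by simp
      have a0: "0 \<le> 2 * pi\<^sup>2 / a $ j" using a[of j] by simp
      have 1: "2 * b $ j * (Im (Z $ Inl j))\<^sup>2 \<le> 2 * b $ j * (norm (Z $ Inl j))\<^sup>2"
        by (rule mult_left_mono[OF sq_le_cmod_sq b0])
      have 2: "2 * pi\<^sup>2 / a $ j * (Im (Z $ Inr j))\<^sup>2 \<le> 2 * pi\<^sup>2 / a $ j * (norm (Z $ Inr j))\<^sup>2"
        by (rule mult_left_mono[OF sq_le_cmod_sq a0])
      show "0 \<le> exp (2 * b $ j * (Im (Z $ Inl j))\<^sup>2) * exp (2 * pi\<^sup>2 / a $ j * (Im (Z $ Inr j))\<^sup>2)" by simp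
      show "exp (2 * b $ j * (Im (Z $ Inl j))\<^sup>2) * exp (2 * pi\<^sup>2 / a $ j * (Im (Z $ Inr j))\<^sup>2)
          \<le> exp (2 * b $ j * (norm (Z $ Inl j))\<^sup>2) * exp (2 * pi\<^sup>2 / a $ j * (norm (Z $ Inr j))\<^sup>2)"
        using 1 2 by (intro mult_mono) auto
    qed
    finally show ?thesis unfolding R .
  qed
  have "F \<in> O_c c"
    unfolding O_c_def
  proof (intro CollectI conjI ent exI[of _ "sqrt (K1 * K2) + 1"] allI)
    show "0 < sqrt (K1 * K2) + 1"
    proof -
      have "0 \<le> sqrt (K1 * K2)" using K10 K20 by simp
      then show ?thesis by linarith
    qed
    fix Z
    have "norm (F Z) \<le> sqrt (K1 * K2) * T Z" by (rule Fb)
    also have "\<dots> \<le> (sqrt (K1 * K2) + 1) * T Z" using T0[of Z] by (simp add: algebra_simps)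
    also have "\<dots> \<le> (sqrt (K1 * K2) + 1) * (\<Prod>k\<in>UNIV. exp (c $ k * (norm (Z $ k))\<^sup>2))"
      using Tb[of Z] K10 K20 by (intro mult_left_mono) auto
    finally show "norm (F Z) \<le> (sqrt (K1 * K2) + 1) * (\<Prod>j\<in>UNIV. exp (c $ j * (norm (Z $ j))\<^sup>2))" .
  qed
  moreover have "\<forall>x \<omega>. F (pair_pt x \<omega>) = complex_of_real ((norm (stft (restr_R \<phi>) f x \<omega>))\<^sup>2)"
    by (simp only: F_def E1_def E2_def Eint_stft1 Eint_stft2 complex_norm_square) simp
  ultimately show "\<exists>F \<in> O_c (\<chi> k. case k of Inl j \<Rightarrow> 2 * b $ j | Inr j \<Rightarrow> 2 * pi\<^sup>2 / a $ j).
           \<forall>x \<omega>. F (pair_pt x \<omega>) = complex_of_real ((norm (stft (restr_R \<phi>) f x \<omega>))\<^sup>2)"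
    unfolding c_def by blast
qed

end
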